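(* Let $P=p_1\cdots p_{m+r}$ and $Q=q_1\cdots q_{m+r}$ be lattice paths from $(0,0)$ to $(m,r)$ with $P$ never going above $Q$, such that the region $[P,Q]$ bounded by $P$ and $Q$ is a border strip. Then the set of facets of the lattice path matroid polytope $\mathcal{P}(M[P,Q])$ is in one-to-one correspondence with the disjoint union $\mathcal{D}(R(P,Q))\sqcup\mathcal{C}(R(P,Q))\sqcup\mathcal{S}(R(P,Q))$.
   Context: Lattice paths use steps $E=(1,0)$, $N=(0,1)$, written as words. For $P,Q$ from $(0,0)$ to $(m,r)$ with $P$ never above $Q$, $M[P,Q]$ is the matroid on $[m+r]$ whose bases are the $r$-subsets $B$ such that the lattice path with North steps exactly at positions in $B$ stays in the region between $P$ and $Q$; $\mathcal{P}(M[P,Q])=\mathrm{conv}\{\sum_{b\in B}e_b: B\text{ a basis}\}\subseteq\mathbb{R}^{m+r}$. A border strip is a connected nonempty skew shape containing no $2\times2$ square; $[P,Q]$ is a border strip iff $p_i=q_i$ for $1<i<m+r$, $p_1=q_{m+r}=E$ and $q_1=p_{m+r}=N$. For such $P,Q$ with $m+r>2$ define $R=R(P,Q)=r_1\cdots r_{m+r}$ by $r_i=p_i(=q_i)$ for $1<i<m+r$, $r_1=r_2$, $r_{m+r}=r_{m+r-1}$; if $m+r=2$, $R=NN$. The $i$-deletion of $M=M[P,Q]$ is the restriction $M|_{[m+r]\setminus\{i\}}$; the $i$-contraction is $M/\{i\}\oplus\{i\}$ (isomorphic to the contraction $M/\{i\}$). An outside corner of $[P,Q]$ is a lattice point which is a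 corner $NE$ (North step followed by East step) on $P$ or a corner $EN$ on $Q$. For an outside corner $(p,q)$, the $(p,q)$-direct sum is $M_1\oplus M_2$ where $M_1,M_2$ are the lattice path matroids of the parts of $[P,Q]$ in the lower-left quadrant and the upper-right quadrant centered at $(p,q)$; if $(p,q)$ is the unique outside corner with $p+q=i$ this is called the $i$-direct sum. Define $\mathcal{D}(R)=\{i\text{-deletion}: r_i=E\}$, $\mathcal{C}(R)=\{i\text{-contraction}: r_i=N\}$, $\mathcal{S}(R)=\{i\text{-direct sum}: r_i\neq r_{i+1}\}$. *)

theory Defs
  imports "HOL-Analysis.Analysis"
begin

text \<open>Lattice path steps: E = (1,0), N = (0,1). A path of length n is a list of
  steps; positions are 1-based, so step i of L is L ! (i - 1).\<close>
datatype step = E | N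

definition hgt :: "step list \<Rightarrow> nat \<Rightarrow> nat" where
  "hgt L k = length (filter (\<lambda>s. s = N) (take k L))"

definition pt :: "step list \<Rightarrow> nat \<Rightarrow> nat \<times> nat" where
  "pt L k = (k - hgt L k, hgt L k)"

definition lpath :: "nat \<Rightarrow> nat \<Rightarrow> step list \<Rightarrow> bool" where
  "lpath m r L \<longleftrightarrow> length L = m + r \<and> hgt L (m + r) = r"

definition never_above :: "step list \<Rightarrow> step list \<Rightarrow> bool" where
  "never_above P Q \<longleftrightarrow> (\<forall>k \<le> length P. hgt P k \<le> hgt Q k)"

definition region :: "step list \<Rightarrow> step list \<Rightarrow> (nat \<times> nat) set" where
  "region P Q = {(x, y). x + y \<le> length P \<and> hgt P (x + y) \<le> y \<and> y \<le> hgt Q (x + y)}"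

type_synonym matroid = "nat set \<times> nat set set"

definition ground :: "matroid \<Rightarrow> nat set" where "ground M = fst M"
definition bases :: "matroid \<Rightarrow> nat set set" where "bases M = snd M"

text \<open>Number of North steps of the path encoded by B among positions 1..j.\<close>
definition nb :: "nat set \<Rightarrow> nat \<Rightarrow> nat" where
  "nb B j = card (B \<inter> {1..j})"

text \<open>The lattice path matroid M[P,Q] on [m+r]: bases are the r-subsets B of [m+r]
  whose path (North steps exactly at positions of B) stays between P and Q.\<close>
definition LPM :: "nat \<Rightarrow> nat \<Rightarrow> step list \<Rightarrow> step list \<Rightarrow> matroid" where
  "LPM m r P Q = ({1..m+r},
     {B. B \<subseteq> {1..m+r} \<and> card B = r \<and>
         (\<forall>k \<le> m + r. hgt P k \<le> nb B k \<and> nb B k \<le> hgt Q k)})"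

text \<open>Indicator vector of B in R^(m+r), where the coordinates 1..m+r are labelled
  by a bijection \<iota> onto the finite index type 'n.\<close>
definition indvec :: "(nat \<Rightarrow> 'n::finite) \<Rightarrow> nat set \<Rightarrow> real ^ 'n" where
  "indvec \<iota> B = (\<chi> j. if j \<in> \<iota> ` B then 1 else 0)"

definition matroid_polytope :: "(nat \<Rightarrow> 'n::finite) \<Rightarrow> matroid \<Rightarrow> (real ^ 'n) set" where
  "matroid_polytope \<iota> M = convex hull (indvec \<iota> ` bases M)"

definition mrank :: "matroid \<Rightarrow> nat set \<Rightarrow> nat" where
  "mrank M X = Max ((\<lambda>B. card (B \<inter> X)) ` bases M)"

definition restrict :: "matroid \<Rightarrow> nat set \<Rightarrow> matroid" where
  "restrict M X = (X, {B \<inter> X | B. B \<in> bases M \<and> card (B \<inter> X) = mrank M X})"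

definition contract :: "matroid \<Rightarrow> nat set \<Rightarrow> matroid" where
  "contract M T = (ground M - T, {B - T | B. B \<in> bases M \<and> card (B \<inter> T) = mrank M T})"

definition dsum :: "matroid \<Rightarrow> matroid \<Rightarrow> matroid" where
  "dsum M1 M2 = (ground M1 \<union> ground M2, {B1 \<union> B2 | B1 B2. B1 \<in> bases M1 \<and> B2 \<in> bases M2})"

text \<open>i-deletion M|_{[m+r]-{i}} and i-contraction M/{i} \<oplus> {i}, where {i} is the
  one-element matroid in which i is a coloop.\<close>
definition deletion :: "matroid \<Rightarrow> nat \<Rightarrow> matroid" where
  "deletion M i = restrict M (ground M - {i})"

definition contraction :: "matroid \<Rightarrow> nat \<Rightarrow> matroid" where
  "contraction M i = dsum (contract M {i}) ({i}, {{i}})"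

definition outside_corners :: "step list \<Rightarrow> step list \<Rightarrow> (nat \<times> nat) set" where
  "outside_corners P Q =
     {pt P k | k. 1 \<le> k \<and> k < length P \<and> P ! (k - 1) = N \<and> P ! k = E} \<union>
     {pt Q k | k. 1 \<le> k \<and> k < length Q \<and> Q ! (k - 1) = E \<and> Q ! k = N}"

text \<open>Lower-left part: lattice path matroid on positions 1..p+q of the part of [P,Q]
  in the quadrant x \<le> p, y \<le> q (paths from (0,0) to (p,q)).\<close>
definition LL_part :: "step list \<Rightarrow> step list \<Rightarrow> nat \<times> nat \<Rightarrow> matroid" where
  "LL_part P Q c = (let p = fst c; q = snd c; k = p + q in
     ({1..k}, {B. B \<subseteq> {1..k} \<and> card B = q \<and>
        (\<forall>j \<le> k. (j - nb B j, nb B j) \<in> region P Q \<and> j - nb B j \<le> p \<and> nb B j \<le> q)}))"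

text \<open>Upper-right part: lattice path matroid on positions p+q+1..m+r of the part of
  [P,Q] in the quadrant x \<ge> p, y \<ge> q (paths from (p,q) to (m,r)).\<close>
definition UR_part :: "nat \<Rightarrow> nat \<Rightarrow> step list \<Rightarrow> step list \<Rightarrow> nat \<times> nat \<Rightarrow> matroid" where
  "UR_part m r P Q c = (let p = fst c; q = snd c; k = p + q in
     ({k+1..m+r}, {B. B \<subseteq> {k+1..m+r} \<and> card B = r - q \<and>
        (\<forall>j. k \<le> j \<and> j \<le> m + r \<longrightarrow>
            (let y = q + card (B \<inter> {k+1..j}) in
               (j - y, y) \<in> region P Q \<and> p \<le> j - y \<and> q \<le> y))}))"

definition corner_dsum :: "nat \<Rightarrow> nat \<Rightarrow> step list \<Rightarrow> step list \<Rightarrow> nat \<times> nat \<Rightarrow> matroid" where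
  "corner_dsum m r P Q c = dsum (LL_part P Q c) (UR_part m r P Q c)"

definition i_dsum :: "nat \<Rightarrow> nat \<Rightarrow> step list \<Rightarrow> step list \<Rightarrow> nat \<Rightarrow> matroid" where
  "i_dsum m r P Q i =
     corner_dsum m r P Q (THE c. c \<in> outside_corners P Q \<and> fst c + snd c = i)"

text \<open>[P,Q] is a border strip (characterisation from the paper); n = m + r \<ge> 2.\<close>
definition border_strip :: "step list \<Rightarrow> step list \<Rightarrow> bool" where
  "border_strip P Q \<longleftrightarrow> (let n = length P in
     2 \<le> n \<and> length Q = n \<and>
     (\<forall>i. 1 < i \<and> i < n \<longrightarrow> P ! (i - 1) = Q ! (i - 1)) \<and>
     P ! 0 = E \<and> Q ! (n - 1) = E \<and> Q ! 0 = N \<and> P ! (n - 1) = N)"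

definition Rword :: "step list \<Rightarrow> step list \<Rightarrow> nat \<Rightarrow> step" where
  "Rword P Q i = (let n = length P in
     if n = 2 then N
     else if i \<le> 1 then P ! 1
     else if i \<ge> n then P ! (n - 2)
     else P ! (i - 1))"

definition Dset :: "nat \<Rightarrow> nat \<Rightarrow> step list \<Rightarrow> step list \<Rightarrow> matroid set" where
  "Dset m r P Q = {deletion (LPM m r P Q) i | i. i \<in> {1..m+r} \<and> Rword P Q i = E}"

definition Cset :: "nat \<Rightarrow> nat \<Rightarrow> step list \<Rightarrow> step list \<Rightarrow> matroid set" where
  "Cset m r P Q = {contraction (LPM m r P Q) i | i. i \<in> {1..m+r} \<and> Rword P Q i = N}"

definition Sset :: "nat \<Rightarrow> nat \<Rightarrow> step list \<Rightarrow> step list \<Rightarrow> matroid set" where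
  "Sset m r P Q = {i_dsum m r P Q i | i. i \<in> {1..<m+r} \<and> Rword P Q i \<noteq> Rword P Q (i + 1)}"

end

theory Submission
  imports Defs
begin


lemma facets_explicit_bij:
  fixes S A :: "'a::euclidean_space set" and I :: "'i set" and a :: "'i \<Rightarrow> 'a" and c :: "'i \<Rightarrow> real"
  assumes finI: "finite I"
    and anz: "\<And>i. i \<in> I \<Longrightarrow> a i \<noteq> 0"
    and affA: "affine A" and SA: "S \<subseteq> A"
    and Sin: "\<And>i x. i \<in> I \<Longrightarrow> x \<in> S \<Longrightarrow> a i \<bullet> x \<le> c i"
    and Hdesc: "\<And>x. x \<in> A \<Longrightarrow> (\<forall>i\<in>I. a i \<bullet> x \<le> c i) \<Longrightarrow> x \<in> S"
    and yex: "\<And>i. i \<in> I \<Longrightarrow> \<exists>y \<in> affine hull S. a i \<bullet> y > c i \<and> (\<forall>j\<in>I. j \<noteq> i \<longrightarrow> a j \<bullet> y \<le> c j)"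
    and x0S: "xz \<in> S" and x0strict: "\<And>i. i \<in> I \<Longrightarrow> a i \<bullet> xz < c i"
  shows "bij_betw (\<lambda>i. S \<inter> {x. a i \<bullet> x = c i}) I {C. C facet_of S}"
proof -
  define H where "H i = {x. a i \<bullet> x \<le> c i}" for i
  define F where "F = H ` I"
  have Hinj: "inj_on H I"
  proof (rule inj_onI)
    fix i j assume ij: "i \<in> I" "j \<in> I" "H i = H j"
    show "i = j"
    proof (rule ccontr)
      assume "i \<noteq> j"
      then obtain y where "a i \<bullet> y > c i" "a j \<bullet> y \<le> c j" using yex[OF ij(1)] ij by fastforce
      then show False using ij(3) by (auto simp: H_def set_eq_iff) (metis not_le)
    qed
  qed
  define a' where "a' h = a (inv_into I H h)" for h
  define c' where "c' h = c (inv_into I H h)" for h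
  have finF: "finite F" using finI by (simp add: F_def)
  have affS: "affine hull S \<subseteq> A" using SA affA by (simp add: hull_minimal)
  have seq: "S = affine hull S \<inter> \<Inter>F"
  proof
    show "S \<subseteq> affine hull S \<inter> \<Inter>F" using Sin by (auto simp: F_def H_def hull_subset[THEN subsetD])
    show "affine hull S \<inter> \<Inter>F \<subseteq> S" using affS Hdesc by (auto simp: F_def H_def)
  qed
  have faceq: "a' h \<noteq> 0 \<and> h = {x. a' h \<bullet> x \<le> c' h}" if hF: "h \<in> F" for h
  proof -
    obtain i where i: "i \<in> I" "h = H i" using hF by (auto simp: F_def)
    then have "inv_into I H h = i" using Hinj by (simp add: inv_into_f_f)
    then show ?thesis using i anz by (simp add: a'_def c'_def H_def)
  qed
  have psub: "S \<subset> affine hull S \<inter> \<Inter>F'" if FF: "F' \<subset> F" for F'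
  proof -
    obtain h where h: "h \<in> F" "h \<notin> F'" using FF by blast
    obtain i where i: "i \<in> I" "h = H i" using h by (auto simp: F_def)
    obtain y where y: "y \<in> affine hull S" "a i \<bullet> y > c i" "\<forall>j\<in>I. j \<noteq> i \<longrightarrow> a j \<bullet> y \<le> c j"
      using yex[OF i(1)] by blast
    have "y \<in> \<Inter>F'"
    proof
      fix g assume "g \<in> F'"
      then obtain j where j: "j \<in> I" "g = H j" using FF by (auto simp: F_def)
      then have "j \<noteq> i" using h i \<open>g \<in> F'\<close> by auto
      then show "y \<in> g" using y j by (auto simp: H_def)
    qed
    moreover have "y \<notin> S" using y Sin[OF i(1)] by force
    moreover have "S \<subseteq> affine hull S \<inter> \<Inter>F'" using seq FF by auto
    ultimately show ?thesis using y by blast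
  qed
  have fac: "C facet_of S \<longleftrightarrow> (\<exists>h. h \<in> F \<and> C = S \<inter> {x. a' h \<bullet> x = c' h})" for C
    by (rule facet_of_polyhedron_explicit[OF finF seq faceq psub])
  have fac2: "C facet_of S \<longleftrightarrow> (\<exists>i\<in>I. C = S \<inter> {x. a i \<bullet> x = c i})" for C
  proof -
    have "(\<exists>h. h \<in> F \<and> C = S \<inter> {x. a' h \<bullet> x = c' h}) \<longleftrightarrow> (\<exists>i\<in>I. C = S \<inter> {x. a i \<bullet> x = c i})"
      using Hinj by (auto simp: F_def a'_def c'_def inv_into_f_f)
    then show ?thesis using fac by simp
  qed
  have inj: "inj_on (\<lambda>i. S \<inter> {x. a i \<bullet> x = c i}) I"
  proof (rule inj_onI)
    fix i j assume ij: "i \<in> I" "j \<in> I" and eq: "S \<inter> {x. a i \<bullet> x = c i} = S \<inter> {x. a j \<bullet> x = c j}"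
    show "i = j"
    proof (rule ccontr)
      assume ne: "i \<noteq> j"
      obtain y where y: "y \<in> affine hull S" "a i \<bullet> y > c i" "\<forall>k\<in>I. k \<noteq> i \<longrightarrow> a k \<bullet> y \<le> c k"
        using yex[OF ij(1)] by blast
      define t where "t = (c i - a i \<bullet> xz) / (a i \<bullet> y - a i \<bullet> xz)"
      have lt: "a i \<bullet> xz < c i" using x0strict ij by auto
      have t0: "0 < t" and t1: "t < 1" using lt y(2) by (auto simp: t_def field_simps)
      define p where "p = (1 - t) *\<^sub>R xz + t *\<^sub>R y"
      have lin: "a k \<bullet> p = (1 - t) * (a k \<bullet> xz) + t * (a k \<bullet> y)" for k
        by (simp add: p_def inner_add_right)
      have tw: "t * (a i \<bullet> y - a i \<bullet> xz) = c i - a i \<bullet> xz"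
        using lt y(2) by (simp add: t_def)
      have pi: "a i \<bullet> p = c i"
        unfolding lin using tw by (simp add: algebra_simps)
      have pk: "a k \<bullet> p \<le> c k" if "k \<in> I" for k
      proof (cases "k = i")
        case True then show ?thesis using pi by simp
      next
        case False
        have "a k \<bullet> xz < c k" "a k \<bullet> y \<le> c k" using x0strict that y False by auto
        then have "(1 - t) * (a k \<bullet> xz) + t * (a k \<bullet> y) \<le> (1 - t) * c k + t * c k"
          using t0 t1 by (intro add_mono mult_left_mono) auto
        then show ?thesis unfolding lin by (simp add: algebra_simps)
      qed
      have pj: "a j \<bullet> p < c j"
      proof -
        have "a j \<bullet> xz < c j" "a j \<bullet> y \<le> c j" using x0strict ij y ne by auto
        then have "(1 - t) * (a j \<bullet> xz) + t * (a j \<bullet> y) < (1 - t) * c j + t * c j"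
          using t0 t1 by (intro add_less_le_mono mult_strict_left_mono mult_left_mono) auto
        then show ?thesis unfolding lin by (simp add: algebra_simps)
      qed
      have "p \<in> affine hull S"
        unfolding p_def by (rule mem_affine[OF affine_affine_hull]) (use x0S y hull_subset[of S affine] in auto)
      then have "p \<in> S" using affS pk Hdesc by auto
      then have "p \<in> S \<inter> {x. a j \<bullet> x = c j}" using eq pi by auto
      then show False using pj by simp
    qed
  qed
  show ?thesis unfolding bij_betw_def using inj fac2 by auto
qed




lemma hgt_0[simp]: "hgt L 0 = 0" by (simp add: hgt_def)

lemma hgt_Suc: "k < length L \<Longrightarrow> hgt L (Suc k) = hgt L k + (if L ! k = N then 1 else 0)"
  by (simp add: hgt_def take_Suc_conv_app_nth)

lemma hgt_le: "hgt L k \<le> k"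
  unfolding hgt_def by (metis dual_order.trans length_filter_le length_take min.cobounded2)

lemma hgt_mono_Suc: "hgt L k \<le> hgt L (Suc k)"
  unfolding hgt_def
  by (metis filter_append length_append le_add1 take_Suc take_add take_all_iff nat_le_linear
       Suc_eq_plus1 take_Suc_conv_app_nth not_less)

locale strip =
  fixes m r :: nat and P Q :: "step list" and \<iota> :: "nat \<Rightarrow> 'n::finite"
  assumes lpP: "lpath m r P" and lpQ: "lpath m r Q" and bs: "border_strip P Q"
    and bij: "bij_betw \<iota> {1..m+r} (UNIV :: 'n set)"
begin

abbreviation "n \<equiv> m + r"

lemma lenP: "length P = n" and lenQ: "length Q = n" and hPn: "hgt P n = r" and hQn: "hgt Q n = r"
  using lpP lpQ by (auto simp: lpath_def)

lemma n2: "2 \<le> n" using bs lenP by (auto simp: border_strip_def Let_def)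

lemma P0: "P ! 0 = E" and Pn: "P ! (n - 1) = N" and Q0: "Q ! 0 = N" and Qn: "Q ! (n - 1) = E"
  and PQ: "\<And>i. 1 < i \<Longrightarrow> i < n \<Longrightarrow> P ! (i - 1) = Q ! (i - 1)"
  using bs lenP by (auto simp: border_strip_def Let_def)

definition pN :: "nat \<Rightarrow> bool" where "pN k = (P ! (k - 1) = N)"
definition h :: "nat \<Rightarrow> nat" where "h k = hgt P k"
definition dd :: "nat \<Rightarrow> real" where "dd k = (if pN k then 1 else 0)"

lemma pN1: "\<not> pN 1" using P0 by (simp add: pN_def)
lemma pNn: "pN n" using Pn by (simp add: pN_def)

lemma h_Suc: "k < n \<Longrightarrow> h (Suc k) = h k + (if pN (Suc k) then 1 else 0)"
  by (simp add: h_def pN_def hgt_Suc lenP)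

lemma h0[simp]: "h 0 = 0" by (simp add: h_def)
lemma npos: "0 < m \<or> 0 < r" using n2 by arith

lemma h1: "h 1 = 0" using h_Suc[of 0] pN1 npos by simp
lemma hn: "h n = r" using hPn by (simp add: h_def)
lemma hn1: "h (n - 1) + 1 = r"
proof -
  have "Suc (n - 1) = n" using n2 by arith
  then show ?thesis using h_Suc[of "n - 1"] pNn n2 hn by simp
qed

lemma hQ: "1 \<le> k \<Longrightarrow> k < n \<Longrightarrow> hgt Q k = h k + 1"
proof (induction k rule: dec_induct)
  case base
  then show ?case using hgt_Suc[of 0 Q] Q0 lenQ h1 npos by simp
next
  case (step k)
  have "hgt Q (Suc k) = hgt Q k + (if Q ! k = N then 1 else 0)" using step lenQ by (simp add: hgt_Suc)
  moreover have "Q ! k = P ! k" using PQ[of "Suc k"] step by simp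
  ultimately show ?case using step h_Suc[of k] by (simp add: pN_def)
qed

lemma h_le: "h k \<le> k" by (simp add: h_def hgt_le)

lemma inj\<iota>: "inj_on \<iota> {1..n}" using bij by (simp add: bij_betw_def)
lemma surj\<iota>: "\<iota> ` {1..n} = UNIV" using bij by (simp add: bij_betw_def)

definition X :: "real^'n \<Rightarrow> nat \<Rightarrow> real" where "X v k = v $ \<iota> k"
definition Ssum :: "real^'n \<Rightarrow> nat \<Rightarrow> real" where "Ssum v k = (\<Sum>j\<in>{1..k}. X v j)"
definition bb :: "(nat \<Rightarrow> real) \<Rightarrow> nat \<Rightarrow> real" where "bb b k = (if 1 \<le> k \<and> k < n then b k else 0)"
definition xk :: "(nat \<Rightarrow> real) \<Rightarrow> nat \<Rightarrow> real" where "xk b k = dd k + bb b k - bb b (k - 1)"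
definition vecb :: "(nat \<Rightarrow> real) \<Rightarrow> real^'n" where "vecb b = (\<chi> j. xk b (inv_into {1..n} \<iota> j))"

lemma X_vecb: "k \<in> {1..n} \<Longrightarrow> X (vecb b) k = xk b k"
  using inv_into_f_f[OF inj\<iota>, of k] by (simp add: X_def vecb_def)

lemma vec_eqI': assumes "\<And>k. k \<in> {1..n} \<Longrightarrow> X v k = X w k" shows "v = w"
proof (rule vec_eq_iff[THEN iffD2], rule allI)
  fix j :: 'n
  obtain k where "k \<in> {1..n}" "j = \<iota> k" using surj\<iota> by (metis UNIV_I imageE)
  then show "v $ j = w $ j" using assms by (simp add: X_def)
qed

lemma X_indvec: "B \<subseteq> {1..n} \<Longrightarrow> k \<in> {1..n} \<Longrightarrow> X (indvec \<iota> B) k = (if k \<in> B then 1 else 0)"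
  unfolding X_def indvec_def using inj_on_image_mem_iff[OF inj\<iota>] by auto

lemma inner_indvec: assumes "K \<subseteq> {1..n}" shows "indvec \<iota> K \<bullet> v = (\<Sum>k\<in>K. X v k)"
proof -
  have "indvec \<iota> K \<bullet> v = (\<Sum>j\<in>UNIV. (if j \<in> \<iota> ` K then 1 else 0) * v $ j)"
    by (simp add: inner_vec_def indvec_def)
  also have "\<dots> = (\<Sum>j\<in>UNIV. if j \<in> \<iota> ` K then v $ j else 0)"
    by (intro sum.cong) auto
  also have "\<dots> = (\<Sum>j\<in>\<iota> ` K. v $ j)"
    by (simp add: sum.If_cases)
  also have "\<dots> = (\<Sum>k\<in>K. X v k)"
    using inj_on_subset[OF inj\<iota> assms] by (simp add: sum.reindex X_def)
  finally show ?thesis .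
qed

lemma X_comb: "X (a *\<^sub>R v + c *\<^sub>R w) k = a * X v k + c * X w k"
  by (simp add: X_def)

lemma Ssum_Suc: "Ssum v (Suc k) = Ssum v k + X v (Suc k)"
  by (simp add: Ssum_def)

lemma Ssum_vecb: "k \<le> n \<Longrightarrow> Ssum (vecb b) k = h k + bb b k"
proof (induction k)
  case 0 then show ?case by (simp add: Ssum_def bb_def)
next
  case (Suc k)
  then have "Ssum (vecb b) (Suc k) = h k + bb b k + xk b (Suc k)"
    by (simp add: Ssum_Suc X_vecb)
  also have "\<dots> = h (Suc k) + bb b (Suc k)"
    using h_Suc[of k] Suc.prems by (simp add: xk_def dd_def)
  finally show ?case .
qed

lemma Ssum_indvec: "B \<subseteq> {1..n} \<Longrightarrow> k \<le> n \<Longrightarrow> Ssum (indvec \<iota> B) k = real (card (B \<inter> {1..k}))"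
proof -
  assume B: "B \<subseteq> {1..n}" and k: "k \<le> n"
  have "Ssum (indvec \<iota> B) k = (\<Sum>j\<in>{1..k}. if j \<in> B then 1 else 0)"
    unfolding Ssum_def using k by (intro sum.cong) (auto simp: X_indvec[OF B])
  also have "\<dots> = real (card (B \<inter> {1..k}))"
    by (simp add: sum.If_cases Int_commute)
  finally show ?thesis .
qed


definition BS :: "nat set set" where "BS = bases (LPM m r P Q)"

lemma BS_iff: "B \<in> BS \<longleftrightarrow> B \<subseteq> {1..n} \<and> card B = r \<and> (\<forall>k\<le>n. h k \<le> nb B k \<and> nb B k \<le> hgt Q k)"
  by (simp add: BS_def bases_def LPM_def h_def)

lemma BS_sub: "B \<in> BS \<Longrightarrow> B \<subseteq> {1..n}" by (simp add: BS_iff)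

lemma finite_BS: "finite BS"
  by (rule finite_subset[of _ "Pow {1..n}"]) (use BS_sub in blast, simp)

definition VV :: "(real^'n) set" where "VV = indvec \<iota> ` BS"
definition Sp :: "(real^'n) set" where "Sp = convex hull VV"

lemma Sp_eq: "matroid_polytope \<iota> (LPM m r P Q) = Sp"
  by (simp add: matroid_polytope_def Sp_def VV_def BS_def)

abbreviation "Rw \<equiv> Rword P Q"

lemma step_cases: "s \<noteq> N \<longleftrightarrow> s = E" by (cases s) auto

lemma Rw2: "n = 2 \<Longrightarrow> Rw k = N" by (simp add: Rword_def lenP)

lemma Rw3: assumes "3 \<le> n" "1 \<le> k" "k \<le> n"
  shows "(Rw k = N) \<longleftrightarrow> pN (if k = 1 then 2 else if k = n then n - 1 else k)"
proof -
  have "n - 2 = n - 1 - 1" by arith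
  then have "P ! (n - 2) = P ! (n - 1 - 1)" by simp
  then show ?thesis using assms by (auto simp: Rword_def lenP pN_def Let_def)
qed

definition Dix :: "nat set" where "Dix = {k\<in>{1..n}. Rw k = E}"
definition Cix :: "nat set" where "Cix = {k\<in>{1..n}. Rw k = N}"
definition Six :: "nat set" where "Six = {k\<in>{1..<n}. Rw k \<noteq> Rw (k + 1)}"
definition II :: "(nat + (nat + nat)) set" where "II = Dix <+> (Cix <+> Six)"

lemma Six_eq: "Six = {k. 2 \<le> k \<and> k + 2 \<le> n \<and> pN k \<noteq> pN (k + 1)}"
proof (cases "n = 2")
  case True
  then show ?thesis by (auto simp: Six_def Rw2)
next
  case False
  then have n3: "3 \<le> n" using n2 by arith
  have eqv: "(Rw k \<noteq> Rw j) \<longleftrightarrow> ((Rw k = N) \<noteq> (Rw j = N))" for k j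
    by (cases "Rw k"; cases "Rw j") auto
  show ?thesis
  proof (intro set_eqI iffI)
    fix k assume "k \<in> Six"
    then have k: "1 \<le> k" "k < n" "(Rw k = N) \<noteq> (Rw (k+1) = N)" by (auto simp: Six_def eqv)
    have "k \<noteq> 1"
    proof
      assume "k = 1"
      moreover have "(Rw 1 = N) = pN 2" "(Rw 2 = N) = pN 2" using Rw3[OF n3, of 1] Rw3[OF n3, of 2] n3 by auto
      ultimately show False using k by (simp add: numeral_2_eq_2)
    qed
    moreover have "k + 1 \<noteq> n"
    proof
      assume a: "k + 1 = n"
      then have "n - 1 = k" by arith
      then have "(Rw k = N) = pN k" "(Rw (k+1) = N) = pN k"
        using Rw3[OF n3, of k] Rw3[OF n3, of "k+1"] a k \<open>k \<noteq> 1\<close> by auto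
      then show False using k by simp
    qed
    ultimately have "2 \<le> k" "k + 2 \<le> n" using k by auto
    moreover have "(Rw k = N) = pN k" "(Rw (k+1) = N) = pN (k+1)"
      using Rw3[OF n3, of k] Rw3[OF n3, of "k+1"] \<open>k \<noteq> 1\<close> \<open>k + 1 \<noteq> n\<close> k by auto
    ultimately show "k \<in> {k. 2 \<le> k \<and> k + 2 \<le> n \<and> pN k \<noteq> pN (k + 1)}"
      using k by auto
  next
    fix k show "k \<in> {k. 2 \<le> k \<and> k + 2 \<le> n \<and> pN k \<noteq> pN (k + 1)} \<Longrightarrow> k \<in> Six"
    proof -
      assume "k \<in> {k. 2 \<le> k \<and> k + 2 \<le> n \<and> pN k \<noteq> pN (k + 1)}"
      then have k: "2 \<le> k" "k + 2 \<le> n" "pN k \<noteq> pN (k + 1)" by auto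
      have "(Rw k = N) = pN k" "(Rw (k+1) = N) = pN (k+1)"
        using Rw3[OF n3, of k] Rw3[OF n3, of "k+1"] k by auto
      then show ?thesis using k by (auto simp: Six_def eqv)
    qed
  qed
qed

lemma finite_II: "finite II"
proof -
  have "finite Dix" "finite Cix" "finite Six" by (auto simp: Dix_def Cix_def Six_def)
  then show ?thesis by (simp add: II_def)
qed

definition aa :: "nat + (nat + nat) \<Rightarrow> real^'n" where
  "aa i = (case i of Inl k \<Rightarrow> - indvec \<iota> {k} | Inr (Inl k) \<Rightarrow> indvec \<iota> {k}
     | Inr (Inr k) \<Rightarrow> (if pN k then - indvec \<iota> {1..k} else indvec \<iota> {1..k}))"
definition cc :: "nat + (nat + nat) \<Rightarrow> real" where
  "cc i = (case i of Inl k \<Rightarrow> 0 | Inr (Inl k) \<Rightarrow> 1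
     | Inr (Inr k) \<Rightarrow> (if pN k then - real (h k) else real (h k) + 1))"

fun con :: "nat + (nat + nat) \<Rightarrow> (nat \<Rightarrow> real) \<Rightarrow> bool" where
  "con (Inl k) b = (0 \<le> xk b k)"
| "con (Inr (Inl k)) b = (xk b k \<le> 1)"
| "con (Inr (Inr k)) b = (if pN k then 0 \<le> bb b k else bb b k \<le> 1)"

fun scon :: "nat + (nat + nat) \<Rightarrow> (nat \<Rightarrow> real) \<Rightarrow> bool" where
  "scon (Inl k) b = (0 < xk b k)"
| "scon (Inr (Inl k)) b = (xk b k < 1)"
| "scon (Inr (Inr k)) b = (if pN k then 0 < bb b k else bb b k < 1)"

lemma II_cases:
  assumes "i \<in> II"
  obtains (D) k where "i = Inl k" "k \<in> {1..n}" "Rw k = E"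
    | (C) k where "i = Inr (Inl k)" "k \<in> {1..n}" "Rw k = N"
    | (S) k where "i = Inr (Inr k)" "2 \<le> k" "k + 2 \<le> n" "pN k \<noteq> pN (k + 1)"
  using assms unfolding II_def Dix_def Cix_def Six_eq by auto

lemma inner_aa:
  assumes "i \<in> II"
  shows "aa i \<bullet> v = (case i of Inl k \<Rightarrow> - X v k | Inr (Inl k) \<Rightarrow> X v k
     | Inr (Inr k) \<Rightarrow> (if pN k then - Ssum v k else Ssum v k))"
  using assms
proof (cases rule: II_cases)
  case (D k) then show ?thesis by (simp add: aa_def inner_indvec)
next
  case (C k) then show ?thesis by (simp add: aa_def inner_indvec)
next
  case (S k)
  then have "{1..k} \<subseteq> {1..n}" by auto
  then show ?thesis using S by (simp add: aa_def inner_indvec Ssum_def)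
qed

lemma aa_vecb:
  assumes "i \<in> II"
  shows "(aa i \<bullet> vecb b \<le> cc i) \<longleftrightarrow> con i b"
  using assms
proof (cases rule: II_cases)
  case (D k) then show ?thesis using inner_aa[OF assms, of "vecb b"] by (simp add: X_vecb cc_def)
next
  case (C k) then show ?thesis using inner_aa[OF assms, of "vecb b"] by (simp add: X_vecb cc_def)
next
  case (S k) then show ?thesis using inner_aa[OF assms, of "vecb b"] by (auto simp: Ssum_vecb cc_def)
qed

lemma aa_vecb_strict:
  assumes "i \<in> II"
  shows "(aa i \<bullet> vecb b < cc i) \<longleftrightarrow> scon i b"
  using assms
proof (cases rule: II_cases)
  case (D k) then show ?thesis using inner_aa[OF assms, of "vecb b"] by (simp add: X_vecb cc_def)
next
  case (C k) then show ?thesis using inner_aa[OF assms, of "vecb b"] by (simp add: X_vecb cc_def)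
next
  case (S k) then show ?thesis using inner_aa[OF assms, of "vecb b"] by (auto simp: Ssum_vecb cc_def)
qed

definition Aset :: "(real^'n) set" where "Aset = {v. indvec \<iota> {1..n} \<bullet> v = real r}"

lemma affine_Aset: "affine Aset" unfolding Aset_def by (rule affine_hyperplane)

lemma Aset_iff: "v \<in> Aset \<longleftrightarrow> Ssum v n = r"
  by (simp add: Aset_def inner_indvec Ssum_def)

lemma vecb_Aset: "vecb b \<in> Aset"
  by (simp add: Aset_iff Ssum_vecb hn bb_def)

end



context strip begin

definition good :: "(nat \<Rightarrow> real) \<Rightarrow> bool" where
  "good b \<longleftrightarrow> (\<forall>k. 1 \<le> k \<and> k < n \<longrightarrow> 0 \<le> b k \<and> b k \<le> 1) \<and>
     (\<forall>k. 2 \<le> k \<and> k < n \<longrightarrow> (if pN k then b k \<le> b (k - 1) else b (k - 1) \<le> b k))"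

lemma xk_1: "xk b 1 = b 1"
proof -
  have "bb b 1 = b 1" "bb b 0 = 0" "dd 1 = 0" using n2 pN1 by (auto simp: bb_def dd_def)
  then show ?thesis by (simp add: xk_def)
qed

lemma xk_Suc0: "xk b (Suc 0) = b (Suc 0)" using xk_1 by simp

lemma xk_n: "xk b n = 1 - b (n - 1)"
proof -
  have "bb b n = 0" "bb b (n - 1) = b (n - 1)" "dd n = 1" using n2 pNn by (auto simp: bb_def dd_def)
  then show ?thesis by (simp add: xk_def)
qed

lemma xk_mid: "2 \<le> k \<Longrightarrow> k < n \<Longrightarrow> xk b k = dd k + b k - b (k - 1)"
proof -
  assume "2 \<le> k" "k < n"
  then have "bb b k = b k" "bb b (k - 1) = b (k - 1)" by (auto simp: bb_def)
  then show ?thesis by (simp add: xk_def)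
qed

lemma good_x: assumes "good b" "1 \<le> k" "k \<le> n" shows "0 \<le> xk b k \<and> xk b k \<le> 1"
proof -
  consider "k = 1" | "k = n" | "2 \<le> k \<and> k < n" using assms n2 by arith
  then show ?thesis
  proof cases
    case 1 then show ?thesis using assms n2 unfolding good_def by (simp add: xk_1 xk_Suc0)
  next
    case 2
    have "1 \<le> n - 1" "n - 1 < n" using n2 by auto
    then show ?thesis using assms 2 by (simp add: xk_n good_def)
  next
    case 3
    have "1 \<le> k - 1" "k - 1 < n" using 3 by auto
    then show ?thesis using assms 3 unfolding good_def
      by (auto simp: xk_mid dd_def split: if_splits; smt (verit))
  qed
qed

lemma Inl_II: "Inl k \<in> II \<longleftrightarrow> k \<in> {1..n} \<and> Rw k = E" by (auto simp: II_def Dix_def)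
lemma InrInl_II: "Inr (Inl k) \<in> II \<longleftrightarrow> k \<in> {1..n} \<and> Rw k = N" by (auto simp: II_def Cix_def)
lemma InrInr_II: "Inr (Inr k) \<in> II \<longleftrightarrow> 2 \<le> k \<and> k + 2 \<le> n \<and> pN k \<noteq> pN (k + 1)"
  by (auto simp: II_def Six_eq)

lemma RwE: "Rw k = E \<longleftrightarrow> Rw k \<noteq> N" by (cases "Rw k") auto

lemma Rw_mid: "2 \<le> k \<Longrightarrow> k < n \<Longrightarrow> (Rw k = N) \<longleftrightarrow> pN k"
  using Rw3[of k] by auto

lemma Rw_1: "(Rw 1 = N) \<longleftrightarrow> (n = 2 \<or> pN 2)"
  using Rw3[of 1] Rw2 n2 by (cases "n = 2") auto

lemma Rw_n: "(Rw n = N) \<longleftrightarrow> (n = 2 \<or> pN (n - 1))"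
  using Rw3[of n] Rw2 n2 by (cases "n = 2") auto

context
  fixes b assumes allcon: "\<forall>i\<in>II. con i b"
begin

lemma F_rel: assumes "2 \<le> k" "k < n" shows "if pN k then b k \<le> b (k - 1) else b (k - 1) \<le> b k"
proof (cases "pN k")
  case True
  then have "Inr (Inl k) \<in> II" using assms Rw_mid by (simp add: InrInl_II)
  then show ?thesis using allcon True assms by (auto simp: xk_mid dd_def)
next
  case False
  then have "Inl k \<in> II" using assms Rw_mid by (simp add: Inl_II RwE)
  then show ?thesis using allcon False assms by (auto simp: xk_mid dd_def)
qed

lemma F_e1a: "n = 2 \<or> pN 2 \<Longrightarrow> b 1 \<le> 1"
proof -
  assume "n = 2 \<or> pN 2"
  then have "Inr (Inl 1) \<in> II" using Rw_1 n2 by (simp add: InrInl_II)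
  then show ?thesis using allcon by (auto simp: xk_1 xk_Suc0)
qed

lemma F_e1b: "n \<noteq> 2 \<Longrightarrow> \<not> pN 2 \<Longrightarrow> 0 \<le> b 1"
proof -
  assume "n \<noteq> 2" "\<not> pN 2"
  then have "Inl 1 \<in> II" using Rw_1 n2 by (simp add: Inl_II RwE)
  then show ?thesis using allcon by (auto simp: xk_1 xk_Suc0)
qed

lemma F_ena: "n = 2 \<or> pN (n - 1) \<Longrightarrow> 0 \<le> b (n - 1)"
proof -
  assume "n = 2 \<or> pN (n - 1)"
  then have "Inr (Inl n) \<in> II" using Rw_n n2 by (simp add: InrInl_II)
  then show ?thesis using allcon by (auto simp: xk_n)
qed

lemma F_enb: "n \<noteq> 2 \<Longrightarrow> \<not> pN (n - 1) \<Longrightarrow> b (n - 1) \<le> 1"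
proof -
  assume "n \<noteq> 2" "\<not> pN (n - 1)"
  then have "Inl n \<in> II" using Rw_n n2 by (simp add: Inl_II RwE)
  then show ?thesis using allcon by (auto simp: xk_n)
qed

lemma F_ca: "2 \<le> k \<Longrightarrow> k + 2 \<le> n \<Longrightarrow> pN k \<Longrightarrow> \<not> pN (k + 1) \<Longrightarrow> 0 \<le> b k"
proof -
  assume a: "2 \<le> k" "k + 2 \<le> n" "pN k" "\<not> pN (k + 1)"
  then have "Inr (Inr k) \<in> II" by (simp add: InrInr_II)
  then show ?thesis using allcon a by (auto simp: bb_def)
qed

lemma F_cb: "2 \<le> k \<Longrightarrow> k + 2 \<le> n \<Longrightarrow> \<not> pN k \<Longrightarrow> pN (k + 1) \<Longrightarrow> b k \<le> 1"
proof -
  assume a: "2 \<le> k" "k + 2 \<le> n" "\<not> pN k" "pN (k + 1)"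
  then have "Inr (Inr k) \<in> II" by (simp add: InrInr_II)
  then show ?thesis using allcon a by (auto simp: bb_def)
qed

lemma lowA: assumes "1 \<le> k" "k \<le> n - 1" shows "(k = 1 \<or> pN k) \<longrightarrow> 0 \<le> b k"
  using assms(2)
proof (induction k rule: inc_induct)
  case base
  show ?case
  proof
    assume a: "n - 1 = 1 \<or> pN (n - 1)"
    then have "n = 2 \<or> pN (n - 1)" using n2 by arith
    then show "0 \<le> b (n - 1)" by (rule F_ena)
  qed
next
  case (step j)
  show ?case
  proof
    assume a: "j = 1 \<or> pN j"
    have j1: "1 \<le> j" using step assms by auto
    show "0 \<le> b j"
    proof (cases "pN (Suc j)")
      case True
      then have "b (Suc j) \<le> b j" using F_rel[of "Suc j"] step j1 by auto
      then show ?thesis using step True by auto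
    next
      case False
      show ?thesis
      proof (cases "j = 1")
        case True
        then have "n \<noteq> 2" using step by auto
        then show ?thesis using F_e1b False True by (simp add: numeral_2_eq_2)
      next
        case jn: False
        then show ?thesis using a F_ca[of j] False step j1 by auto
      qed
    qed
  qed
qed

lemma lowB: assumes "1 \<le> k" "k \<le> n - 1" shows "0 \<le> b k"
  using assms
proof (induction k rule: nat_induct_at_least)
  case base then show ?case using lowA[of 1] by auto
next
  case (Suc j)
  show ?case
  proof (cases "pN (Suc j)")
    case True then show ?thesis using lowA[of "Suc j"] Suc by auto
  next
    case False
    then have "b j \<le> b (Suc j)" using F_rel[of "Suc j"] Suc by auto
    then show ?thesis using Suc by auto
  qed
qed

lemma upA: assumes "1 \<le> k" "k \<le> n - 1" shows "(k = 1 \<or> \<not> pN k) \<longrightarrow> b k \<le> 1"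
  using assms(2)
proof (induction k rule: inc_induct)
  case base
  show ?case
  proof
    assume a: "n - 1 = 1 \<or> \<not> pN (n - 1)"
    show "b (n - 1) \<le> 1"
    proof (cases "n = 2")
      case True then show ?thesis using F_e1a by simp
    next
      case False then show ?thesis using a n2 F_enb by auto
    qed
  qed
next
  case (step j)
  show ?case
  proof
    assume a: "j = 1 \<or> \<not> pN j"
    have j1: "1 \<le> j" using step assms by auto
    show "b j \<le> 1"
    proof (cases "pN (Suc j)")
      case False
      then have "b j \<le> b (Suc j)" using F_rel[of "Suc j"] step j1 by auto
      then show ?thesis using step False by auto
    next
      case True
      show ?thesis
      proof (cases "j = 1")
        case True
        then show ?thesis using F_e1a \<open>pN (Suc j)\<close> by (simp add: numeral_2_eq_2)
      next
        case jn: False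
        then show ?thesis using a F_cb[of j] True step j1 by auto
      qed
    qed
  qed
qed

lemma upB: assumes "1 \<le> k" "k \<le> n - 1" shows "b k \<le> 1"
  using assms
proof (induction k rule: nat_induct_at_least)
  case base then show ?case using upA[of 1] by auto
next
  case (Suc j)
  show ?case
  proof (cases "pN (Suc j)")
    case False then show ?thesis using upA[of "Suc j"] Suc by auto
  next
    case True
    then have "b (Suc j) \<le> b j" using F_rel[of "Suc j"] Suc by auto
    then show ?thesis using Suc by auto
  qed
qed

lemma con_good: "good b"
  unfolding good_def
proof (intro conjI allI impI)
  fix k assume "1 \<le> k \<and> k < n"
  then show "0 \<le> b k" "b k \<le> 1" using lowB[of k] upB[of k] by auto
next
  fix k assume "2 \<le> k \<and> k < n"
  then show "if pN k then b k \<le> b (k - 1) else b (k - 1) \<le> b k" using F_rel[of k] by blast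
qed

end

end



context strip begin

lemma vecb_affine:
  assumes "\<alpha> + \<beta> = 1"
  shows "vecb (\<lambda>k. \<alpha> * u k + \<beta> * w k) = \<alpha> *\<^sub>R vecb u + \<beta> *\<^sub>R vecb w"
proof (rule vec_eqI')
  fix k assume k: "k \<in> {1..n}"
  have bbl: "bb (\<lambda>k. \<alpha> * u k + \<beta> * w k) j = \<alpha> * bb u j + \<beta> * bb w j" for j
    by (simp add: bb_def)
  have "dd k = \<alpha> * dd k + \<beta> * dd k" using assms by (simp add: algebra_simps flip: distrib_right)
  then show "X (vecb (\<lambda>k. \<alpha> * u k + \<beta> * w k)) k = X (\<alpha> *\<^sub>R vecb u + \<beta> *\<^sub>R vecb w) k"
    using k by (simp add: X_comb X_vecb xk_def bbl algebra_simps)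
qed

lemma nb_card: "nb B k = card (B \<inter> {1..k})" by (simp add: nb_def)

lemma vertex:
  assumes g: "good b" and int: "\<And>k. 1 \<le> k \<Longrightarrow> k < n \<Longrightarrow> b k = 0 \<or> b k = 1"
  shows "vecb b \<in> VV"
proof -
  have bb01: "bb b j = 0 \<or> bb b j = 1" for j using int by (auto simp: bb_def)
  have x01: "xk b k = 0 \<or> xk b k = 1" if "k \<in> {1..n}" for k
  proof -
    have "0 \<le> xk b k" "xk b k \<le> 1" using good_x[OF g, of k] that by auto
    moreover have "dd k = 0 \<or> dd k = 1" by (simp add: dd_def)
    ultimately show ?thesis using bb01[of k] bb01[of "k - 1"] unfolding xk_def by auto
  qed
  define B where "B = {k\<in>{1..n}. xk b k = 1}"
  have Bsub: "B \<subseteq> {1..n}" by (auto simp: B_def)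
  have eq: "vecb b = indvec \<iota> B"
  proof (rule vec_eqI')
    fix k assume k: "k \<in> {1..n}"
    show "X (vecb b) k = X (indvec \<iota> B) k"
    proof -
      have "k \<in> B \<longleftrightarrow> xk b k = 1" using k by (simp add: B_def)
      then show ?thesis using x01[OF k] X_indvec[OF Bsub k] X_vecb[OF k] by auto
    qed
  qed
  have nbk: "real (nb B k) = h k + bb b k" if "k \<le> n" for k
    using Ssum_indvec[OF Bsub that] Ssum_vecb[OF that, of b] eq by (simp add: nb_card)
  have cardB: "card B = r"
  proof -
    have "B \<inter> {1..n} = B" using Bsub by auto
    then have "real (card B) = h n + bb b n" using nbk[of n] by (simp add: nb_card)
    then show ?thesis using hn by (simp add: bb_def)
  qed
  have "B \<in> BS"
    unfolding BS_iff
  proof (intro conjI allI impI)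
    show "B \<subseteq> {1..n}" by (rule Bsub)
    show "card B = r" by (rule cardB)
  next
    fix k assume k: "k \<le> n"
    have "0 \<le> bb b k" "bb b k \<le> 1" using bb01[of k] by auto
    then show "h k \<le> nb B k" using nbk[OF k] by linarith
    show "nb B k \<le> hgt Q k"
    proof -
      consider "k = 0" | "k = n" | "1 \<le> k \<and> k < n" using k by arith
      then show ?thesis
      proof cases
        case 1 then show ?thesis by (simp add: nb_card)
      next
        case 2
        then have "real (nb B k) = r" using nbk[OF k] hn by (simp add: bb_def)
        then show ?thesis using 2 hQn by simp
      next
        case 3
        then have "real (nb B k) \<le> h k + 1" using nbk[OF k] \<open>bb b k \<le> 1\<close> by linarith
        then show ?thesis using hQ[of k] 3 by simp
      qed
    qed
  qed
  then show ?thesis using eq by (simp add: VV_def)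
qed

lemma VV_Sp: "VV \<subseteq> Sp" unfolding Sp_def by (rule hull_subset)

lemma good_in_Sp: "good b \<Longrightarrow> vecb b \<in> Sp"
proof (induction "card {k. 1 \<le> k \<and> k < n \<and> 0 < b k}" arbitrary: b rule: less_induct)
  case less
  define U where "U = {k. 1 \<le> k \<and> k < n \<and> 0 < b k}"
  have finU: "finite U" by (rule finite_subset[of _ "{..<n}"]) (auto simp: U_def)
  have b01: "0 \<le> b k \<and> b k \<le> 1" if "1 \<le> k" "k < n" for k using less.prems that by (auto simp: good_def)
  show ?case
  proof (cases "\<forall>k. 1 \<le> k \<and> k < n \<longrightarrow> b k = 0 \<or> b k = 1")
    case True
    then show ?thesis using vertex[OF less.prems] VV_Sp by auto
  next
    case False
    then obtain k0 where k0: "1 \<le> k0" "k0 < n" "0 < b k0" "b k0 < 1" using b01 by force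
    then have k0U: "k0 \<in> U" by (simp add: U_def)
    define \<beta> where "\<beta> = Min (b ` U)"
    have \<beta>in: "\<beta> \<in> b ` U" unfolding \<beta>_def using finU k0U by (intro Min_in) auto
    have \<beta>le: "\<beta> \<le> b k" if "k \<in> U" for k unfolding \<beta>_def using finU that by auto
    have \<beta>pos: "0 < \<beta>" using \<beta>in by (auto simp: U_def)
    have \<beta>1: "\<beta> < 1" using \<beta>le[OF k0U] k0 by linarith
    define u where "u k = (if k \<in> U then 1 else 0 :: real)" for k
    define b' where "b' k = (b k - \<beta> * u k) / (1 - \<beta>)" for k
    have bdec: "b = (\<lambda>k. \<beta> * u k + (1 - \<beta>) * b' k)"
      using \<beta>1 by (auto simp: b'_def)
    have notU: "b k = 0" if "1 \<le> k" "k < n" "k \<notin> U" for k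
      using b01[OF that(1,2)] that by (auto simp: U_def)
    have gu: "good u"
      unfolding good_def
    proof (intro conjI allI impI)
      fix k assume "1 \<le> k \<and> k < n" then show "0 \<le> u k" "u k \<le> 1" by (auto simp: u_def)
    next
      fix k assume k: "2 \<le> k \<and> k < n"
      have rel: "if pN k then b k \<le> b (k - 1) else b (k - 1) \<le> b k"
        using less.prems k by (auto simp: good_def)
      have k1: "1 \<le> k - 1" "k - 1 < n" using k by auto
      show "if pN k then u k \<le> u (k - 1) else u (k - 1) \<le> u k"
        using rel k k1 by (auto simp: u_def U_def split: if_splits)
    qed
    have gb': "good b'"
      unfolding good_def
    proof (intro conjI allI impI)
      fix k assume k: "1 \<le> k \<and> k < n"
      show "0 \<le> b' k"
      proof (cases "k \<in> U")
        case True then show ?thesis using \<beta>le[OF True] \<beta>1 by (simp add: b'_def u_def)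
      next
        case False then show ?thesis using notU[of k] k by (simp add: b'_def u_def)
      qed
      show "b' k \<le> 1"
      proof (cases "k \<in> U")
        case True then show ?thesis using b01[of k] k \<beta>1 by (simp add: b'_def u_def)
      next
        case False then show ?thesis using notU[of k] k by (simp add: b'_def u_def)
      qed
    next
      fix k assume k: "2 \<le> k \<and> k < n"
      have rel: "if pN k then b k \<le> b (k - 1) else b (k - 1) \<le> b k"
        using less.prems k by (auto simp: good_def)
      have k1: "1 \<le> k - 1" "k - 1 < n" using k by auto
      have "if pN k then b k - \<beta> * u k \<le> b (k - 1) - \<beta> * u (k - 1)
            else b (k - 1) - \<beta> * u (k - 1) \<le> b k - \<beta> * u k"
        using rel k k1 \<beta>le[of k] \<beta>le[of "k - 1"] notU[of k] notU[of "k - 1"]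
        by (auto simp: u_def U_def split: if_splits)
      then show "if pN k then b' k \<le> b' (k - 1) else b' (k - 1) \<le> b' k"
        using \<beta>1 by (auto simp: b'_def divide_right_mono split: if_splits)
    qed
    have Usub: "{k. 1 \<le> k \<and> k < n \<and> 0 < b' k} \<subset> U"
    proof
      show "{k. 1 \<le> k \<and> k < n \<and> 0 < b' k} \<subseteq> U"
      proof
        fix k assume "k \<in> {k. 1 \<le> k \<and> k < n \<and> 0 < b' k}"
        then show "k \<in> U" using notU[of k] by (cases "k \<in> U") (auto simp: b'_def u_def)
      qed
      obtain k1 where k1: "k1 \<in> U" "b k1 = \<beta>" using \<beta>in by auto
      then have "b' k1 = 0" by (simp add: b'_def u_def)
      then show "{k. 1 \<le> k \<and> k < n \<and> 0 < b' k} \<noteq> U" using k1 by auto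
    qed
    then have "card {k. 1 \<le> k \<and> k < n \<and> 0 < b' k} < card {k. 1 \<le> k \<and> k < n \<and> 0 < b k}"
      using finU psubset_card_mono unfolding U_def by blast
    then have IH: "vecb b' \<in> Sp" using less.hyps gb' by blast
    have "vecb u \<in> Sp" using vertex[OF gu] VV_Sp by (auto simp: u_def)
    moreover have "vecb b = \<beta> *\<^sub>R vecb u + (1 - \<beta>) *\<^sub>R vecb b'"
      by (subst bdec, rule vecb_affine) simp
    ultimately show ?thesis using IH \<beta>pos \<beta>1 convex_convex_hull[of VV]
      unfolding Sp_def by (simp add: convexD)
  qed
qed

definition bv :: "real^'n \<Rightarrow> nat \<Rightarrow> real" where "bv v k = Ssum v k - h k"

lemma vecb_bv: assumes "v \<in> Aset" shows "vecb (bv v) = v"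
proof (rule vec_eqI')
  fix k assume k: "k \<in> {1..n}"
  have bbv: "bb (bv v) j = Ssum v j - h j" if "j \<le> n" for j
  proof -
    show ?thesis
    proof (cases "j = 0")
      case True then show ?thesis by (simp add: bb_def bv_def Ssum_def)
    next
      case False
      then show ?thesis using assms hn that n2 by (cases "j = n") (auto simp: bb_def bv_def Aset_iff)
    qed
  qed
  have ksuc: "k = Suc (k - 1)" using k by auto
  have "Ssum v k = Ssum v (k - 1) + X v k" using Ssum_Suc[of v "k - 1"] ksuc by simp
  moreover have "h k = h (k - 1) + (if pN k then 1 else 0)" using h_Suc[of "k - 1"] ksuc k by auto
  ultimately show "X (vecb (bv v)) k = X v k"
    using k bbv[of k] bbv[of "k - 1"] by (simp add: X_vecb xk_def dd_def split: if_splits)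
qed

lemma Hdesc: assumes "v \<in> Aset" "\<forall>i\<in>II. aa i \<bullet> v \<le> cc i" shows "v \<in> Sp"
proof -
  have "\<forall>i\<in>II. con i (bv v)" using assms aa_vecb vecb_bv[OF assms(1)] by metis
  then have "good (bv v)" by (rule con_good)
  then show ?thesis using good_in_Sp vecb_bv[OF assms(1)] by metis
qed

lemma VV_props: assumes "B \<in> BS"
  shows "\<And>k. k \<in> {1..n} \<Longrightarrow> X (indvec \<iota> B) k = (if k \<in> B then 1 else 0)"
    and "\<And>k. k \<le> n \<Longrightarrow> Ssum (indvec \<iota> B) k = real (nb B k)"
  using assms X_indvec Ssum_indvec by (auto simp: BS_iff nb_card)

lemma Sin: assumes i: "i \<in> II" and x: "x \<in> Sp" shows "aa i \<bullet> x \<le> cc i"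
proof -
  have "VV \<subseteq> {x. aa i \<bullet> x \<le> cc i}"
  proof
    fix y assume "y \<in> VV"
    then obtain B where B: "B \<in> BS" "y = indvec \<iota> B" by (auto simp: VV_def)
    have nbB: "h k \<le> nb B k \<and> nb B k \<le> h k + 1" if "1 \<le> k" "k < n" for k
    proof -
      have "\<forall>k\<le>n. h k \<le> nb B k \<and> nb B k \<le> hgt Q k" using B(1) by (simp add: BS_iff)
      then have "nb B k \<le> hgt Q k" "h k \<le> nb B k" using that by auto
      then show ?thesis using hQ[OF that] by simp
    qed
    show "y \<in> {x. aa i \<bullet> x \<le> cc i}"
      using i
    proof (cases rule: II_cases)
      case (D k) then show ?thesis using B VV_props(1)[OF B(1), of k] inner_aa[OF i, of y] by (auto simp: cc_def)
    next
      case (C k) then show ?thesis using B VV_props(1)[OF B(1), of k] inner_aa[OF i, of y] by (auto simp: cc_def)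
    next
      case (S k) then show ?thesis using B VV_props(2)[OF B(1), of k] inner_aa[OF i, of y] nbB[of k]
        by (auto simp: cc_def)
    qed
  qed
  then have "Sp \<subseteq> {x. aa i \<bullet> x \<le> cc i}" unfolding Sp_def
    by (intro hull_minimal convex_halfspace_le) auto
  then show ?thesis using x by auto
qed

lemma Sp_Aset: "Sp \<subseteq> Aset"
proof -
  have "VV \<subseteq> Aset"
  proof
    fix y assume "y \<in> VV"
    then obtain B where B: "B \<in> BS" "y = indvec \<iota> B" by (auto simp: VV_def)
    have "B \<inter> {1..n} = B" using B BS_sub by auto
    then show "y \<in> Aset" using VV_props(2)[OF B(1), of n] B by (simp add: Aset_iff nb_card BS_iff)
  qed
  then show ?thesis unfolding Sp_def by (intro hull_minimal affine_imp_convex affine_Aset)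
qed

end



context strip begin

lemma II_cases2:
  assumes "i \<in> II"
  obtains (D) k where "i = Inl k" "1 \<le> k" "k \<le> n" "k = 1 \<longrightarrow> n \<noteq> 2 \<and> \<not> pN 2"
      "k = n \<longrightarrow> n \<noteq> 2 \<and> \<not> pN (n - 1)" "2 \<le> k \<and> k < n \<longrightarrow> \<not> pN k"
    | (C) k where "i = Inr (Inl k)" "1 \<le> k" "k \<le> n" "k = 1 \<longrightarrow> n = 2 \<or> pN 2"
      "k = n \<longrightarrow> n = 2 \<or> pN (n - 1)" "2 \<le> k \<and> k < n \<longrightarrow> pN k"
    | (S) k where "i = Inr (Inr k)" "2 \<le> k" "k + 2 \<le> n" "pN k \<noteq> pN (k + 1)"
  using assms
proof (cases rule: II_cases)
  case (D k)
  have nN: "Rw k \<noteq> N" using D by simp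
  have a: "k = 1 \<longrightarrow> n \<noteq> 2 \<and> \<not> pN 2" using nN Rw_1 by auto
  have b: "k = n \<longrightarrow> n \<noteq> 2 \<and> \<not> pN (n - 1)" using nN Rw_n by auto
  have c: "2 \<le> k \<and> k < n \<longrightarrow> \<not> pN k" using nN Rw_mid[of k] by auto
  show ?thesis using that(1)[of k] D a b c by auto
next
  case (C k)
  have a: "k = 1 \<longrightarrow> n = 2 \<or> pN 2" using C Rw_1 by auto
  have b: "k = n \<longrightarrow> n = 2 \<or> pN (n - 1)" using C Rw_n by auto
  have c: "2 \<le> k \<and> k < n \<longrightarrow> pN k" using C Rw_mid[of k] by auto
  show ?thesis using that(2)[of k] C a b c by auto
next
  case (S k)
  then show ?thesis using that(3)[of k] by auto
qed

definition bump :: "nat \<Rightarrow> real \<Rightarrow> nat \<Rightarrow> real" where "bump q w = (\<lambda>k. if k = q then w else 1/2)"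
definition cutup :: "nat \<Rightarrow> nat \<Rightarrow> real" where "cutup k0 = (\<lambda>k. if k < k0 then 0 else 1)"
definition cutdn :: "nat \<Rightarrow> nat \<Rightarrow> real" where "cutdn k0 = (\<lambda>k. if k < k0 then 1 else 0)"

definition LC :: "nat \<Rightarrow> bool" where
  "LC q \<longleftrightarrow> 1 \<le> q \<and> q + 1 \<le> n \<and> (2 \<le> q \<longrightarrow> pN q) \<and> (q + 2 \<le> n \<longrightarrow> \<not> pN (q + 1))"
definition HC :: "nat \<Rightarrow> bool" where
  "HC q \<longleftrightarrow> 1 \<le> q \<and> q + 1 \<le> n \<and> (2 \<le> q \<longrightarrow> \<not> pN q) \<and> (q + 2 \<le> n \<longrightarrow> pN (q + 1))"

definition lowc :: "nat \<Rightarrow> nat + (nat + nat)" where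
  "lowc q = (if q = 1 \<and> n \<noteq> 2 then Inl 1 else if q + 1 = n then Inr (Inl n) else Inr (Inr q))"
definition highc :: "nat \<Rightarrow> nat + (nat + nat)" where
  "highc q = (if q = 1 then Inr (Inl 1) else if q + 1 = n then Inl n else Inr (Inr q))"

lemma xk_gen: "1 \<le> k \<Longrightarrow> k \<le> n \<Longrightarrow> xk b k =
   (if k = 1 then b 1 else if k = n then 1 - b (n - 1) else dd k + b k - b (k - 1))"
  using xk_1 xk_n xk_mid[of k] n2 by auto

lemma bump_good_low: assumes "LC q" "0 \<le> w" "w \<le> 1/2" shows "good (bump q w)"
  unfolding good_def
proof (intro conjI allI impI)
  fix k assume "1 \<le> k \<and> k < n" then show "0 \<le> bump q w k" "bump q w k \<le> 1" using assms by (auto simp: bump_def)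
next
  fix k assume k: "2 \<le> k \<and> k < n"
  show "if pN k then bump q w k \<le> bump q w (k - 1) else bump q w (k - 1) \<le> bump q w k"
  proof (cases "k = q")
    case True then show ?thesis using assms k by (auto simp: bump_def LC_def)
  next
    case False
    show ?thesis
    proof (cases "k = q + 1")
      case True then show ?thesis using assms k by (auto simp: bump_def LC_def)
    next
      case False2: False
      then have "k - 1 \<noteq> q" using k by auto
      then show ?thesis using False by (auto simp: bump_def)
    qed
  qed
qed

lemma bump_good_high: assumes "HC q" "1/2 \<le> w" "w \<le> 1" shows "good (bump q w)"
  unfolding good_def
proof (intro conjI allI impI)
  fix k assume "1 \<le> k \<and> k < n" then show "0 \<le> bump q w k" "bump q w k \<le> 1" using assms by (auto simp: bump_def)
next
  fix k assume k: "2 \<le> k \<and> k < n"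
  show "if pN k then bump q w k \<le> bump q w (k - 1) else bump q w (k - 1) \<le> bump q w k"
  proof (cases "k = q")
    case True then show ?thesis using assms k by (auto simp: bump_def HC_def)
  next
    case False
    show ?thesis
    proof (cases "k = q + 1")
      case True then show ?thesis using assms k by (auto simp: bump_def HC_def)
    next
      case False2: False
      then have "k - 1 \<noteq> q" using k by auto
      then show ?thesis using False by (auto simp: bump_def)
    qed
  qed
qed



lemma bump_other: "k \<noteq> q \<Longrightarrow> bump q w k = 1/2" by (simp add: bump_def)
lemma bump_at: "bump q w q = w" by (simp add: bump_def)

lemma bump_low_con: assumes L: "LC q" and w: "-1/2 \<le> w" "w \<le> 1/2" and j: "j \<in> II" and jn: "j \<noteq> lowc q"
  shows "con j (bump q w)"
  using j
proof (cases rule: II_cases2)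
  case (D k)
  consider "k = 1" | "k = n" "k \<noteq> 1" | "2 \<le> k" "k < n" using D by arith
  then show ?thesis
  proof cases
    case 1
    have "q \<noteq> 1" using jn D 1 by (auto simp: lowc_def)
    then show ?thesis using D 1 by (simp add: xk_1 xk_Suc0 bump_other)
  next
    case 2
    have "bump q w (n - 1) \<le> 1/2" using w by (simp add: bump_def)
    then show ?thesis using D 2 by (simp add: xk_n)
  next
    case 3
    have "k \<noteq> q" using L D 3 by (auto simp: LC_def)
    moreover have "bump q w (k - 1) \<le> 1/2" using w by (simp add: bump_def)
    ultimately show ?thesis using D 3 by (simp add: xk_mid dd_def bump_other)
  qed
next
  case (C k)
  consider "k = 1" | "k = n" "k \<noteq> 1" | "2 \<le> k" "k < n" using C by arith
  then show ?thesis
  proof cases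
    case 1
    have "bump q w 1 \<le> 1/2" using w by (simp add: bump_def)
    then show ?thesis using C 1 by (simp add: xk_1 xk_Suc0)
  next
    case 2
    have "q + 1 \<noteq> n"
    proof
      assume qn: "q + 1 = n"
      then have "lowc q = Inr (Inl n)" by (auto simp: lowc_def)
      then show False using jn C 2 by simp
    qed
    then have "n - 1 \<noteq> q" using n2 by arith
    then show ?thesis using C 2 by (simp add: xk_n bump_other)
  next
    case 3
    have "k \<noteq> q + 1" using L C 3 by (auto simp: LC_def)
    then have "k - 1 \<noteq> q" using 3 by arith
    moreover have "bump q w k \<le> 1/2" using w by (simp add: bump_def)
    ultimately show ?thesis using C 3 by (simp add: xk_mid dd_def bump_other)
  qed
next
  case (S k)
  have bbk: "bb (bump q w) k = bump q w k" using S by (simp add: bb_def)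
  show ?thesis
  proof (cases "pN k")
    case True
    have "k \<noteq> q" using jn S by (auto simp: lowc_def)
    then show ?thesis using True S bbk by (simp add: bump_other)
  next
    case False
    have "bump q w k \<le> 1/2" using w by (simp add: bump_def)
    then show ?thesis using False S bbk by simp
  qed
qed


lemma bump_high_con: assumes L: "HC q" and w: "1/2 \<le> w" "w \<le> 3/2" and j: "j \<in> II" and jn: "j \<noteq> highc q"
  shows "con j (bump q w)"
  using j
proof (cases rule: II_cases2)
  case (D k)
  consider "k = 1" | "k = n" "k \<noteq> 1" | "2 \<le> k" "k < n" using D by arith
  then show ?thesis
  proof cases
    case 1
    have "bump q w 1 \<ge> 1/2" using w by (simp add: bump_def)
    then show ?thesis using D 1 by (simp add: xk_1 xk_Suc0)
  next
    case 2
    have "q + 1 \<noteq> n"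
    proof
      assume qn: "q + 1 = n"
      then have "highc q = Inl n" using D 2 by (auto simp: highc_def)
      then show False using jn D 2 by simp
    qed
    then have "n - 1 \<noteq> q" using n2 by arith
    then show ?thesis using D 2 by (simp add: xk_n bump_other)
  next
    case 3
    have "k \<noteq> q + 1" using L D 3 by (auto simp: HC_def)
    then have "k - 1 \<noteq> q" using 3 by arith
    moreover have "bump q w k \<ge> 1/2" using w by (simp add: bump_def)
    ultimately show ?thesis using D 3 by (simp add: xk_mid dd_def bump_other)
  qed
next
  case (C k)
  consider "k = 1" | "k = n" "k \<noteq> 1" | "2 \<le> k" "k < n" using C by arith
  then show ?thesis
  proof cases
    case 1
    have "q \<noteq> 1" using jn C 1 by (auto simp: highc_def)
    then show ?thesis using C 1 by (simp add: xk_1 xk_Suc0 bump_other)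
  next
    case 2
    have "bump q w (n - 1) \<ge> 1/2" using w by (simp add: bump_def)
    then show ?thesis using C 2 by (simp add: xk_n)
  next
    case 3
    have "k \<noteq> q" using L C 3 by (auto simp: HC_def)
    moreover have "bump q w (k - 1) \<ge> 1/2" using w by (simp add: bump_def)
    ultimately show ?thesis using C 3 by (simp add: xk_mid dd_def bump_other)
  qed
next
  case (S k)
  have bbk: "bb (bump q w) k = bump q w k" using S by (simp add: bb_def)
  show ?thesis
  proof (cases "pN k")
    case True
    have "bump q w k \<ge> 1/2" using w by (simp add: bump_def)
    then show ?thesis using True S bbk by simp
  next
    case False
    have "k \<noteq> q" using jn S by (auto simp: highc_def)
    then show ?thesis using False S bbk by (simp add: bump_other)
  qed
qed

lemma lowc_II: assumes "LC q" shows "lowc q \<in> II" "con (lowc q) (bump q w) \<longleftrightarrow> 0 \<le> w"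
proof -
  have q: "1 \<le> q" "q + 1 \<le> n" "2 \<le> q \<longrightarrow> pN q" "q + 2 \<le> n \<longrightarrow> \<not> pN (q + 1)"
    using assms by (auto simp: LC_def)
  consider "q = 1" "n \<noteq> 2" | "q + 1 = n" | "2 \<le> q" "q + 2 \<le> n" using q by arith
  then have "lowc q \<in> II \<and> (con (lowc q) (bump q w) \<longleftrightarrow> 0 \<le> w)"
  proof cases
    case 1
    then have "lowc q = Inl 1" by (simp add: lowc_def)
    moreover have "Inl 1 \<in> II" using 1 q Rw_1 n2 by (auto simp: Inl_II RwE numeral_2_eq_2)
    ultimately show ?thesis using 1 by (simp add: xk_1 xk_Suc0 bump_def)
  next
    case 2
    then have "lowc q = Inr (Inl n)" by (auto simp: lowc_def)
    moreover have nq: "n - 1 = q" using 2 by arith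
    have "n = 2 \<or> pN (n - 1)" using 2 q nq by auto
    then have "Inr (Inl n) \<in> II" using Rw_n n2 by (auto simp: InrInl_II)
    moreover have "n - 1 = q" using 2 by arith
    ultimately show ?thesis by (simp add: xk_n bump_at)
  next
    case 3
    then have "lowc q = Inr (Inr q)" by (auto simp: lowc_def)
    moreover have "Inr (Inr q) \<in> II" using 3 q by (auto simp: InrInr_II)
    moreover have "pN q" using 3 q by auto
    ultimately show ?thesis using 3 by (simp add: bb_def bump_at)
  qed
  then show "lowc q \<in> II" "con (lowc q) (bump q w) \<longleftrightarrow> 0 \<le> w" by auto
qed

lemma highc_II: assumes "HC q" shows "highc q \<in> II" "con (highc q) (bump q w) \<longleftrightarrow> w \<le> 1"
proof -
  have q: "1 \<le> q" "q + 1 \<le> n" "2 \<le> q \<longrightarrow> \<not> pN q" "q + 2 \<le> n \<longrightarrow> pN (q + 1)"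
    using assms by (auto simp: HC_def)
  consider "q = 1" | "q + 1 = n" "q \<noteq> 1" | "2 \<le> q" "q + 2 \<le> n" using q by arith
  then have "highc q \<in> II \<and> (con (highc q) (bump q w) \<longleftrightarrow> w \<le> 1)"
  proof cases
    case 1
    then have "highc q = Inr (Inl 1)" by (simp add: highc_def)
    moreover have "n = 2 \<or> pN 2" using 1 q by (auto simp: numeral_2_eq_2)
    then have "Inr (Inl 1) \<in> II" using Rw_1 n2 by (auto simp: InrInl_II)
    ultimately show ?thesis using 1 by (simp add: xk_1 xk_Suc0 bump_def)
  next
    case 2
    then have "highc q = Inl n" by (auto simp: highc_def)
    moreover have nq: "n - 1 = q" using 2 by arith
    have "n \<noteq> 2" "\<not> pN (n - 1)" using 2 q nq by auto
    then have "Inl n \<in> II" using Rw_n n2 by (auto simp: Inl_II RwE)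
    moreover have "n - 1 = q" using 2 by arith
    ultimately show ?thesis by (simp add: xk_n bump_at)
  next
    case 3
    then have "highc q = Inr (Inr q)" by (auto simp: highc_def)
    moreover have "Inr (Inr q) \<in> II" using 3 q by (auto simp: InrInr_II)
    moreover have "\<not> pN q" using 3 q by auto
    ultimately show ?thesis using 3 by (simp add: bb_def bump_at)
  qed
  then show "highc q \<in> II" "con (highc q) (bump q w) \<longleftrightarrow> w \<le> 1" by auto
qed

end



context strip begin

lemma cut_cases: "k = 1 \<or> (k = n \<and> k \<noteq> 1) \<or> (2 \<le> k \<and> k < n) \<or> k = 0 \<or> k > n" by arith

lemma cutup_con: assumes k0: "2 \<le> k0" "k0 < n" and j: "j \<in> II" and jn: "j \<noteq> Inr (Inl k0)"
  shows "con j (cutup k0)"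
  using j
proof (cases rule: II_cases2)
  case (D k)
  consider "k = 1" | "k = n" "k \<noteq> 1" | "2 \<le> k" "k < n" using D by arith
  then show ?thesis
  proof cases
    case 1 then show ?thesis using k0 by (simp add: D xk_1 xk_Suc0 cutup_def)
  next
    case 2 then show ?thesis using k0 by (simp add: D xk_n cutup_def)
  next
    case 3 then show ?thesis using k0 by (auto simp: D xk_mid cutup_def dd_def)
  qed
next
  case (C k)
  consider "k = 1" | "k = n" "k \<noteq> 1" | "2 \<le> k" "k < n" using C by arith
  then show ?thesis
  proof cases
    case 1 then show ?thesis using k0 by (simp add: C xk_1 xk_Suc0 cutup_def)
  next
    case 2 then show ?thesis using k0 by (simp add: C xk_n cutup_def)
  next
    case 3
    have "k \<noteq> k0" using jn C by auto
    then show ?thesis using k0 3 by (auto simp: C xk_mid cutup_def dd_def)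
  qed
next
  case (S k) then show ?thesis by (auto simp: bb_def cutup_def)
qed

lemma cutdn_con: assumes k0: "2 \<le> k0" "k0 < n" and j: "j \<in> II" and jn: "j \<noteq> Inl k0"
  shows "con j (cutdn k0)"
  using j
proof (cases rule: II_cases2)
  case (D k)
  consider "k = 1" | "k = n" "k \<noteq> 1" | "2 \<le> k" "k < n" using D by arith
  then show ?thesis
  proof cases
    case 1 then show ?thesis using k0 by (simp add: D xk_1 xk_Suc0 cutdn_def)
  next
    case 2 then show ?thesis using k0 by (simp add: D xk_n cutdn_def)
  next
    case 3
    have "k \<noteq> k0" using jn D by auto
    then show ?thesis using k0 3 by (auto simp: D xk_mid cutdn_def dd_def)
  qed
next
  case (C k)
  consider "k = 1" | "k = n" "k \<noteq> 1" | "2 \<le> k" "k < n" using C by arith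
  then show ?thesis
  proof cases
    case 1 then show ?thesis using k0 by (simp add: C xk_1 xk_Suc0 cutdn_def)
  next
    case 2 then show ?thesis using k0 by (simp add: C xk_n cutdn_def)
  next
    case 3 then show ?thesis using k0 by (auto simp: C xk_mid cutdn_def dd_def)
  qed
next
  case (S k) then show ?thesis by (auto simp: bb_def cutdn_def)
qed

lemma cutdn_good: assumes "pN k0" shows "good (cutdn k0)"
  unfolding good_def
proof (intro conjI allI impI)
  fix k assume "2 \<le> k \<and> k < n"
  then show "if pN k then cutdn k0 k \<le> cutdn k0 (k - 1) else cutdn k0 (k - 1) \<le> cutdn k0 k"
    using assms by (cases "k = k0") (auto simp: cutdn_def)
qed (auto simp: cutdn_def)

lemma cutup_good: assumes "\<not> pN k0" shows "good (cutup k0)"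
  unfolding good_def
proof (intro conjI allI impI)
  fix k assume "2 \<le> k \<and> k < n"
  then show "if pN k then cutup k0 k \<le> cutup k0 (k - 1) else cutup k0 (k - 1) \<le> cutup k0 k"
    using assms by (cases "k = k0") (auto simp: cutup_def)
qed (auto simp: cutup_def)

lemma half_good: "good (\<lambda>_. 1/2)" unfolding good_def by auto

lemma mk_y:
  assumes gz: "good bz" and gc: "good bc" and i: "i \<in> II"
    and viol: "\<not> con i yb" and oth: "\<And>j. j \<in> II \<Longrightarrow> j \<noteq> i \<Longrightarrow> con j yb"
    and eq: "yb = (\<lambda>k. 2 * bz k + (-1) * bc k)"
  shows "\<exists>y\<in>affine hull Sp. aa i \<bullet> y > cc i \<and> (\<forall>j\<in>II. j \<noteq> i \<longrightarrow> aa j \<bullet> y \<le> cc j)"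
proof -
  have e: "vecb yb = 2 *\<^sub>R vecb bz + (-1) *\<^sub>R vecb bc" unfolding eq by (rule vecb_affine) simp
  have "vecb bz \<in> affine hull Sp" "vecb bc \<in> affine hull Sp"
    using good_in_Sp[OF gz] good_in_Sp[OF gc] hull_subset[of Sp affine] by auto
  then have "2 *\<^sub>R vecb bz + (-1) *\<^sub>R vecb bc \<in> affine hull Sp"
    by (intro mem_affine[OF affine_affine_hull]) auto
  then have m: "vecb yb \<in> affine hull Sp" by (simp only: e)
  have v: "aa i \<bullet> vecb yb > cc i" using aa_vecb[OF i] viol by (simp add: not_le[symmetric])
  have o: "\<forall>j\<in>II. j \<noteq> i \<longrightarrow> aa j \<bullet> vecb yb \<le> cc j" using aa_vecb oth by blast
  show ?thesis using m v o by blast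
qed

lemma y_low: assumes L: "LC q" and i: "lowc q = i"
  shows "\<exists>y\<in>affine hull Sp. aa i \<bullet> y > cc i \<and> (\<forall>j\<in>II. j \<noteq> i \<longrightarrow> aa j \<bullet> y \<le> cc j)"
proof (rule mk_y[where bz = "bump q 0" and bc = "bump q (1/2)" and yb = "bump q (-1/2)"])
  show "good (bump q 0)" by (rule bump_good_low[OF L]) auto
  show "good (bump q (1/2))" by (rule bump_good_low[OF L]) auto
  show "i \<in> II" using lowc_II(1)[OF L] i by simp
  show "\<not> con i (bump q (-1/2))" using lowc_II(2)[OF L] i by simp
  show "con j (bump q (-1/2))" if "j \<in> II" "j \<noteq> i" for j
    using bump_low_con[OF L _ _ that(1)] that i by simp
  show "bump q (-1/2) = (\<lambda>k. 2 * bump q 0 k + (-1) * bump q (1/2) k)"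
    by (auto simp: bump_def)
qed

lemma y_high: assumes L: "HC q" and i: "highc q = i"
  shows "\<exists>y\<in>affine hull Sp. aa i \<bullet> y > cc i \<and> (\<forall>j\<in>II. j \<noteq> i \<longrightarrow> aa j \<bullet> y \<le> cc j)"
proof (rule mk_y[where bz = "bump q 1" and bc = "bump q (1/2)" and yb = "bump q (3/2)"])
  show "good (bump q 1)" by (rule bump_good_high[OF L]) auto
  show "good (bump q (1/2))" by (rule bump_good_high[OF L]) auto
  show "i \<in> II" using highc_II(1)[OF L] i by simp
  show "\<not> con i (bump q (3/2))" using highc_II(2)[OF L] i by simp
  show "con j (bump q (3/2))" if "j \<in> II" "j \<noteq> i" for j
    using bump_high_con[OF L _ _ that(1)] that i by simp
  show "bump q (3/2) = (\<lambda>k. 2 * bump q 1 k + (-1) * bump q (1/2) k)"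
    by (auto simp: bump_def)
qed

lemma yex: assumes i: "i \<in> II"
  shows "\<exists>y\<in>affine hull Sp. aa i \<bullet> y > cc i \<and> (\<forall>j\<in>II. j \<noteq> i \<longrightarrow> aa j \<bullet> y \<le> cc j)"
  using i
proof (cases rule: II_cases2)
  case (D k)
  consider "k = 1" | "k = n" "k \<noteq> 1" | "2 \<le> k" "k < n" using D by arith
  then show ?thesis
  proof cases
    case 1
    have "LC 1" using D 1 n2 by (auto simp: LC_def numeral_2_eq_2)
    moreover have "lowc 1 = i" using D 1 by (simp add: lowc_def)
    ultimately show ?thesis by (rule y_low)
  next
    case 2
    have nq: "n - 1 + 1 = n" "n - 1 \<noteq> 1" using 2 D n2 by auto
    have "HC (n - 1)" using D 2 nq by (auto simp: HC_def)
    moreover have "highc (n - 1) = i" using D 2 nq by (simp add: highc_def)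
    ultimately show ?thesis by (rule y_high)
  next
    case 3
    have npk: "\<not> pN k" using D 3 by auto
    show ?thesis
    proof (rule mk_y[where bz = "\<lambda>_. 1/2" and bc = "cutup k" and yb = "cutdn k"])
      show "good (\<lambda>_. 1/2)" by (rule half_good)
      show "good (cutup k)" by (rule cutup_good[OF npk])
      show "\<not> con i (cutdn k)" using D 3 npk by (simp add: xk_mid cutdn_def dd_def)
      show "con j (cutdn k)" if "j \<in> II" "j \<noteq> i" for j using cutdn_con[OF 3 that(1)] that D by simp
      show "cutdn k = (\<lambda>ka. 2 * (1 / 2) + - 1 * cutup k ka)" by (auto simp: cutdn_def cutup_def)
    qed (rule i)
  qed
next
  case (C k)
  consider "k = 1" | "k = n" "k \<noteq> 1" | "2 \<le> k" "k < n" using C by arith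
  then show ?thesis
  proof cases
    case 1
    have "HC 1" using C 1 n2 by (auto simp: HC_def numeral_2_eq_2)
    moreover have "highc 1 = i" using C 1 by (simp add: highc_def)
    ultimately show ?thesis by (rule y_high)
  next
    case 2
    have nq: "n - 1 + 1 = n" using n2 by auto
    have "LC (n - 1)" using C 2 nq by (auto simp: LC_def)
    moreover have "lowc (n - 1) = i" using C 2 nq by (auto simp: lowc_def)
    ultimately show ?thesis by (rule y_low)
  next
    case 3
    have pk: "pN k" using C 3 by auto
    show ?thesis
    proof (rule mk_y[where bz = "\<lambda>_. 1/2" and bc = "cutdn k" and yb = "cutup k"])
      show "good (\<lambda>_. 1/2)" by (rule half_good)
      show "good (cutdn k)" by (rule cutdn_good[OF pk])
      show "\<not> con i (cutup k)" using C 3 pk by (simp add: xk_mid cutup_def dd_def)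
      show "con j (cutup k)" if "j \<in> II" "j \<noteq> i" for j using cutup_con[OF 3 that(1)] that C by simp
      show "cutup k = (\<lambda>ka. 2 * (1 / 2) + - 1 * cutdn k ka)" by (auto simp: cutdn_def cutup_def)
    qed (rule i)
  qed
next
  case (S k)
  show ?thesis
  proof (cases "pN k")
    case True
    have "LC k" using S True by (auto simp: LC_def)
    moreover have "lowc k = i" using S by (auto simp: lowc_def)
    ultimately show ?thesis by (rule y_low)
  next
    case False
    have "HC k" using S False by (auto simp: HC_def)
    moreover have "highc k = i" using S by (auto simp: highc_def)
    ultimately show ?thesis by (rule y_high)
  qed
qed

end



context strip begin

definition \<delta> :: real where "\<delta> = 1 / (4 * real n)"
definition b0 :: "nat \<Rightarrow> real" where "b0 k = 1/2 + \<delta> * (real k - 1 - 2 * real (h k))"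

lemma \<delta>_pos: "0 < \<delta>" using n2 by (simp add: \<delta>_def)
lemma \<delta>_small: "\<delta> \<le> 1/8" using n2 by (simp add: \<delta>_def field_simps)

lemma b0_range: assumes "1 \<le> k" "k < n" shows "1/4 \<le> b0 k \<and> b0 k \<le> 3/4"
proof -
  have hk: "h k \<le> k" by (rule h_le)
  have t1: "- real n \<le> real k - 1 - 2 * real (h k)" using hk assms by linarith
  have t2: "real k - 1 - 2 * real (h k) \<le> real n" using assms by linarith
  have "\<delta> * real n = 1/4" using n2 by (simp add: \<delta>_def)
  moreover have "\<delta> * (- real n) \<le> \<delta> * (real k - 1 - 2 * real (h k))"
    using t1 \<delta>_pos by (intro mult_left_mono) auto
  moreover have "\<delta> * (real k - 1 - 2 * real (h k)) \<le> \<delta> * real n"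
    using t2 \<delta>_pos by (intro mult_left_mono) auto
  moreover have "\<delta> * (- real n) = - (\<delta> * real n)" by (simp only: mult_minus_right)
  ultimately show ?thesis unfolding b0_def by linarith
qed

lemma b0_step: assumes "2 \<le> k" "k < n" shows "b0 k - b0 (k - 1) = \<delta> * (1 - 2 * dd k)"
proof -
  have ks: "k = Suc (k - 1)" using assms by auto
  have "h k = h (k - 1) + (if pN k then 1 else 0)" using h_Suc[of "k - 1"] ks assms by auto
  moreover have "real (k - 1) = real k - 1" using assms by auto
  ultimately show ?thesis unfolding b0_def dd_def by (auto simp: algebra_simps)
qed

lemma good_b0: "good b0"
  unfolding good_def
proof (intro conjI allI impI)
  fix k assume "1 \<le> k \<and> k < n" then show "0 \<le> b0 k" "b0 k \<le> 1" using b0_range[of k] by auto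
next
  fix k assume k: "2 \<le> k \<and> k < n"
  show "if pN k then b0 k \<le> b0 (k - 1) else b0 (k - 1) \<le> b0 k"
    using b0_step[of k] k \<delta>_pos by (auto simp: dd_def)
qed

lemma xk_b0: assumes "1 \<le> k" "k \<le> n" shows "0 < xk b0 k \<and> xk b0 k < 1"
proof -
  consider "k = 1" | "k = n" "k \<noteq> 1" | "2 \<le> k" "k < n" using assms by arith
  then show ?thesis
  proof cases
    case 1 
    have "1 < n" using n2 by simp
    then show ?thesis using b0_range[of 1] 1 xk_1[of b0] by simp
  next
    case 2
    have "1 \<le> n - 1" "n - 1 < n" using n2 by auto
    then show ?thesis using b0_range[of "n - 1"] 2 by (simp add: xk_n)
  next
    case 3
    have "xk b0 k = dd k + \<delta> * (1 - 2 * dd k)" using 3 b0_step[of k] by (simp add: xk_mid)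
    then show ?thesis using \<delta>_pos \<delta>_small by (auto simp: dd_def)
  qed
qed

lemma scon_b0: "i \<in> II \<Longrightarrow> scon i b0"
proof -
  assume i: "i \<in> II"
  then show ?thesis
  proof (cases rule: II_cases2)
    case (D k) then show ?thesis using xk_b0[of k] by simp
  next
    case (C k) then show ?thesis using xk_b0[of k] by simp
  next
    case (S k) then show ?thesis using b0_range[of k] by (simp add: bb_def)
  qed
qed

theorem facet_bij: "bij_betw (\<lambda>i. Sp \<inter> {x. aa i \<bullet> x = cc i}) II {C. C facet_of Sp}"
proof (rule facets_explicit_bij[where A = Aset and xz = "vecb b0"])
  show "finite II" by (rule finite_II)
  show "affine Aset" by (rule affine_Aset)
  show "Sp \<subseteq> Aset" by (rule Sp_Aset)
  show "\<And>i x. i \<in> II \<Longrightarrow> x \<in> Sp \<Longrightarrow> aa i \<bullet> x \<le> cc i" by (rule Sin)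
  show "\<And>x. x \<in> Aset \<Longrightarrow> \<forall>i\<in>II. aa i \<bullet> x \<le> cc i \<Longrightarrow> x \<in> Sp" by (rule Hdesc)
  show "\<And>i. i \<in> II \<Longrightarrow> \<exists>y\<in>affine hull Sp. cc i < aa i \<bullet> y \<and> (\<forall>j\<in>II. j \<noteq> i \<longrightarrow> aa j \<bullet> y \<le> cc j)"
    by (rule yex)
  show "vecb b0 \<in> Sp" by (rule good_in_Sp[OF good_b0])
  show st: "\<And>i. i \<in> II \<Longrightarrow> aa i \<bullet> vecb b0 < cc i" using aa_vecb_strict scon_b0 by blast
  show "\<And>i. i \<in> II \<Longrightarrow> aa i \<noteq> 0"
  proof
    fix i assume i: "i \<in> II" and z: "aa i = 0"
    obtain y where "cc i < aa i \<bullet> y" using yex[OF i] by blast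
    moreover have "aa i \<bullet> vecb b0 < cc i" using st[OF i] .
    ultimately show False using z by simp
  qed
qed

end



lemma hgt_add: "hgt L (a + d) \<le> hgt L a + d"
proof -
  have "hgt L (a + d) = hgt L a + length (filter (\<lambda>s. s = N) (take d (drop a L)))"
    by (simp add: hgt_def take_add)
  moreover have "length (filter (\<lambda>s. s = N) (take d (drop a L))) \<le> d"
  proof -
    have "length (filter (\<lambda>s. s = N) (take d (drop a L))) \<le> length (take d (drop a L))"
      by (rule length_filter_le)
    also have "\<dots> \<le> d" by simp
    finally show ?thesis .
  qed
  ultimately show ?thesis by simp
qed

lemma hgt_mono: "a \<le> b \<Longrightarrow> hgt L a \<le> hgt L b"
proof -
  assume "a \<le> b"
  then obtain d where "b = a + d" using le_Suc_ex by blast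
  then show ?thesis by (simp add: hgt_def take_add)
qed

lemma hgt_diff: "a \<le> b \<Longrightarrow> hgt L b \<le> hgt L a + (b - a)"
  using hgt_add[of L a "b - a"] by simp

lemma nb_mono: "j \<le> i \<Longrightarrow> nb B j \<le> nb B i"
  unfolding nb_def by (intro card_mono) auto

lemma nb_le: "nb B j \<le> j"
proof -
  have "card (B \<inter> {1..j}) \<le> card {1..j}" by (intro card_mono) auto
  then show ?thesis by (simp add: nb_def)
qed

lemma nb_diff: assumes "j \<le> i" shows "nb B i \<le> nb B j + (i - j)"
proof -
  have "B \<inter> {1..i} \<subseteq> (B \<inter> {1..j}) \<union> {j+1..i}" by auto
  then have "nb B i \<le> card ((B \<inter> {1..j}) \<union> {j+1..i})" unfolding nb_def by (intro card_mono) auto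
  also have "\<dots> \<le> nb B j + card {j+1..i}" unfolding nb_def by (rule card_Un_le)
  finally show ?thesis by simp
qed

lemma nb_split: assumes "i \<le> j" shows "nb B j = nb B i + card (B \<inter> {i+1..j})"
proof -
  have "B \<inter> {1..j} = (B \<inter> {1..i}) \<union> (B \<inter> {i+1..j})" using assms by auto
  moreover have "(B \<inter> {1..i}) \<inter> (B \<inter> {i+1..j}) = {}" by auto
  ultimately show ?thesis unfolding nb_def by (simp add: card_Un_disjoint)
qed

lemma region_iff: "y \<le> j \<Longrightarrow> (j - y, y) \<in> region P Q \<longleftrightarrow> j \<le> length P \<and> hgt P j \<le> y \<and> y \<le> hgt Q j"
  by (simp add: region_def)

lemma face_hull:
  fixes V :: "'a::euclidean_space set"
  assumes fin: "finite V" and le: "\<And>v. v \<in> V \<Longrightarrow> a \<bullet> v \<le> c"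
  shows "convex hull V \<inter> {x. a \<bullet> x = c} = convex hull (V \<inter> {x. a \<bullet> x = c})"
proof
  show "convex hull (V \<inter> {x. a \<bullet> x = c}) \<subseteq> convex hull V \<inter> {x. a \<bullet> x = c}"
  proof -
    have "convex hull (V \<inter> {x. a \<bullet> x = c}) \<subseteq> {x. a \<bullet> x = c}"
      by (intro hull_minimal) (auto simp: convex_hyperplane)
    then show ?thesis using hull_mono[of "V \<inter> {x. a \<bullet> x = c}" V] by auto
  qed
  show "convex hull V \<inter> {x. a \<bullet> x = c} \<subseteq> convex hull (V \<inter> {x. a \<bullet> x = c})"
  proof
    fix x assume x: "x \<in> convex hull V \<inter> {x. a \<bullet> x = c}"
    then obtain u where u0: "\<forall>v\<in>V. 0 \<le> u v" and u1: "sum u V = 1" and ux: "(\<Sum>v\<in>V. u v *\<^sub>R v) = x"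
      using convex_hull_finite[OF fin] by auto
    have "a \<bullet> x = (\<Sum>v\<in>V. u v * (a \<bullet> v))" unfolding ux[symmetric] by (simp add: inner_sum_right)
    have e1: "(\<Sum>v\<in>V. u v * (c - a \<bullet> v)) = (\<Sum>v\<in>V. c * u v) - (\<Sum>v\<in>V. u v * (a \<bullet> v))"
    proof -
      have "(\<Sum>v\<in>V. u v * (c - a \<bullet> v)) = (\<Sum>v\<in>V. c * u v - u v * (a \<bullet> v))"
        by (intro sum.cong) (auto simp: algebra_simps)
      then show ?thesis by (simp only: sum_subtractf)
    qed
    have "(\<Sum>v\<in>V. c * u v) = c * sum u V" by (rule sum_distrib_left[symmetric])
    then have e2: "(\<Sum>v\<in>V. c * u v) = c" using u1 by simp
    have ax: "a \<bullet> x = c" using x by (simp only: Int_iff mem_Collect_eq)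
    have s0: "(\<Sum>v\<in>V. u v * (c - a \<bullet> v)) = 0"
      using ax e1 e2 \<open>a \<bullet> x = (\<Sum>v\<in>V. u v * (a \<bullet> v))\<close> by linarith
    have nn: "\<forall>v\<in>V. 0 \<le> u v * (c - a \<bullet> v)"
    proof
      fix v assume v: "v \<in> V"
      have "0 \<le> u v" "0 \<le> c - a \<bullet> v" using u0 le[OF v] v by auto
      then show "0 \<le> u v * (c - a \<bullet> v)" by (rule mult_nonneg_nonneg)
    qed
    have z: "\<forall>v\<in>V. u v * (c - a \<bullet> v) = 0"
      using iffD1[OF sum_nonneg_eq_0_iff[OF fin bspec[OF nn]] s0] .
    define W where "W = V \<inter> {x. a \<bullet> x = c}"
    have finW: "finite W" using fin by (simp add: W_def)
    have uz: "u v = 0" if "v \<in> V" "v \<notin> W" for v using z that by (auto simp: W_def)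
    have "sum u W = sum u V"
      using uz by (intro sum.mono_neutral_left[OF fin]) (auto simp: W_def)
    moreover have "(\<Sum>v\<in>W. u v *\<^sub>R v) = (\<Sum>v\<in>V. u v *\<^sub>R v)"
      using uz by (intro sum.mono_neutral_left[OF fin]) (auto simp: W_def)
    ultimately show "x \<in> convex hull W"
      using u0 u1 ux convex_hull_finite[OF finW] by (auto simp: W_def)
  qed
qed




context strip begin

definition psi :: "nat + (nat + nat) \<Rightarrow> (real^'n) set" where
  "psi i = Sp \<inter> {x. aa i \<bullet> x = cc i}"

lemma finite_VV: "finite VV" using finite_BS by (simp add: VV_def)

lemma psi_hull: assumes i: "i \<in> II"
  shows "psi i = convex hull (indvec \<iota> ` {B\<in>BS. aa i \<bullet> indvec \<iota> B = cc i})"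
proof -
  have "psi i = convex hull (VV \<inter> {x. aa i \<bullet> x = cc i})"
    unfolding psi_def Sp_def
    by (rule face_hull[OF finite_VV]) (use Sin[OF i] VV_Sp in auto)
  moreover have "VV \<inter> {x. aa i \<bullet> x = cc i} = indvec \<iota> ` {B\<in>BS. aa i \<bullet> indvec \<iota> B = cc i}"
    by (auto simp: VV_def)
  ultimately show ?thesis by simp
qed

definition qq :: "nat \<Rightarrow> nat" where "qq k = (if pN k then h k else h k + 1)"

lemma psi_C: assumes k: "k \<in> Cix" shows "psi (Inr (Inl k)) = convex hull (indvec \<iota> ` {B\<in>BS. k \<in> B})"
proof -
  have i: "Inr (Inl k) \<in> II" unfolding II_def by (intro InrI InlI k)
  have k1: "k \<in> {1..n}" using k by (simp add: Cix_def)
  have "{B\<in>BS. aa (Inr (Inl k)) \<bullet> indvec \<iota> B = cc (Inr (Inl k))} = {B\<in>BS. k \<in> B}"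
    using inner_aa[OF i] VV_props(1)[OF _ k1] by (auto simp: cc_def split: if_splits)
  then show ?thesis using psi_hull[OF i] by simp
qed

lemma psi_S: assumes k: "k \<in> Six" shows "psi (Inr (Inr k)) = convex hull (indvec \<iota> ` {B\<in>BS. nb B k = qq k})"
proof -
  have i: "Inr (Inr k) \<in> II" unfolding II_def by (intro InrI k)
  have kn: "k \<le> n" using k by (simp add: Six_eq)
  have "{B\<in>BS. aa (Inr (Inr k)) \<bullet> indvec \<iota> B = cc (Inr (Inr k))} = {B\<in>BS. nb B k = qq k}"
    using inner_aa[OF i] VV_props(2)[OF _ kn] by (auto simp: cc_def qq_def)
  then show ?thesis using psi_hull[OF i] by simp
qed

lemma psi_bij: "bij_betw psi II {C. C facet_of Sp}"
  using facet_bij unfolding psi_def .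

lemma psi_ne: "i \<in> II \<Longrightarrow> psi i \<noteq> {}"
  using psi_bij unfolding bij_betw_def facet_of_def by auto

abbreviation "MM \<equiv> LPM m r P Q"

lemma bases_MM: "bases MM = BS" by (simp add: BS_def)
lemma ground_MM: "ground MM = {1..n}" by (simp add: ground_def LPM_def)

lemma mrank1: assumes "B0 \<in> BS" "k \<in> B0" shows "mrank MM {k} = 1"
  unfolding mrank_def bases_MM
proof (rule Max_eqI)
  show "finite ((\<lambda>B. card (B \<inter> {k})) ` BS)" using finite_BS by simp
  show "y \<le> 1" if "y \<in> (\<lambda>B. card (B \<inter> {k})) ` BS" for y
    using that by (auto simp: card_le_Suc0_iff_eq)
  show "1 \<in> (\<lambda>B. card (B \<inter> {k})) ` BS"
  proof
    show "1 = card (B0 \<inter> {k})" using assms by (simp add: Int_absorb1)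
  qed (use assms in auto)
qed

lemma contraction_bases: assumes "B0 \<in> BS" "k \<in> B0"
  shows "bases (contraction MM k) = {B\<in>BS. k \<in> B}"
proof -
  have c1: "card (B \<inter> {k}) = 1 \<longleftrightarrow> k \<in> B" for B :: "nat set"
    by (cases "k \<in> B") (auto simp: Int_absorb1)
  have "bases (contraction MM k) = {B1 \<union> B2 | B1 B2. B1 \<in> {B - {k} | B. B \<in> BS \<and> k \<in> B} \<and> B2 = {k}}"
    unfolding contraction_def dsum_def contract_def bases_def
    using mrank1[OF assms] c1 by (simp add: bases_MM[unfolded bases_def])
  also have "\<dots> = {B\<in>BS. k \<in> B}"
  proof (intro set_eqI iffI)
    fix x assume "x \<in> {B1 \<union> B2 | B1 B2. B1 \<in> {B - {k} | B. B \<in> BS \<and> k \<in> B} \<and> B2 = {k}}"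
    then obtain B where "B \<in> BS" "k \<in> B" "x = (B - {k}) \<union> {k}" by auto
    moreover then have "x = B" by auto
    ultimately show "x \<in> {B\<in>BS. k \<in> B}" by simp
  next
    fix x assume x: "x \<in> {B\<in>BS. k \<in> B}"
    then have "x = (x - {k}) \<union> {k}" by auto
    then show "x \<in> {B1 \<union> B2 | B1 B2. B1 \<in> {B - {k} | B. B \<in> BS \<and> k \<in> B} \<and> B2 = {k}}"
      using x by blast
  qed
  finally show ?thesis .
qed

end



context strip begin

definition LLp :: "nat \<Rightarrow> nat \<Rightarrow> nat set \<Rightarrow> bool" where
  "LLp i q B1 \<longleftrightarrow> (B1 \<subseteq> {1..i} \<and> card B1 = q \<and> (\<forall>j\<le>i. (j - nb B1 j, nb B1 j) \<in> region P Q \<and> j - nb B1 j \<le> i - q \<and> nb B1 j \<le> q))"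
definition URp :: "nat \<Rightarrow> nat \<Rightarrow> nat set \<Rightarrow> bool" where
  "URp i q B2 \<longleftrightarrow> (B2 \<subseteq> {i+1..n} \<and> card B2 = r - q \<and> (\<forall>j. i \<le> j \<and> j \<le> n \<longrightarrow>
          (j - (q + card (B2 \<inter> {i+1..j})), q + card (B2 \<inter> {i+1..j})) \<in> region P Q \<and>
          i - q \<le> j - (q + card (B2 \<inter> {i+1..j})) \<and> q \<le> q + card (B2 \<inter> {i+1..j})))"

lemma corner_bases_raw: assumes "q \<le> i"
  shows "bases (corner_dsum m r P Q (i - q, q)) =
    {B1 \<union> B2 | B1 B2. LLp i q B1 \<and> URp i q B2}"
  using assms unfolding LLp_def URp_def corner_dsum_def dsum_def LL_part_def UR_part_def bases_def
  by (simp add: Let_def)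

lemma card_Icc_le: "card (B \<inter> {a+1..b}) \<le> b - a"
proof -
  have "card (B \<inter> {a+1..b}) \<le> card {a+1..b}" by (intro card_mono) auto
  then show ?thesis by simp
qed

lemma corner_bases: assumes iq: "i \<le> n" "q \<le> i" "h i \<le> q" "q \<le> hgt Q i"
  shows "bases (corner_dsum m r P Q (i - q, q)) = {B\<in>BS. nb B i = q}"
proof -
  have qr: "q \<le> r" using iq hgt_mono[of i n Q] hQn by simp
  have BSk: "B \<in> BS \<Longrightarrow> k \<le> n \<Longrightarrow> h k \<le> nb B k \<and> nb B k \<le> hgt Q k" for B k
    by (simp add: BS_iff)
  show ?thesis
    unfolding corner_bases_raw[OF iq(2)]
  proof (intro set_eqI iffI)
    fix B assume "B \<in> {B1 \<union> B2 | B1 B2. LLp i q B1 \<and> URp i q B2}"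
    then obtain B1 B2 where B: "B = B1 \<union> B2" and LB1: "LLp i q B1" and UB2: "URp i q B2" by blast
    have B1s: "B1 \<subseteq> {1..i}" and cB1: "card B1 = q"
      and L: "\<forall>j\<le>i. (j - nb B1 j, nb B1 j) \<in> region P Q \<and> j - nb B1 j \<le> i - q \<and> nb B1 j \<le> q"
      using LB1 unfolding LLp_def by blast+
    have B2s: "B2 \<subseteq> {i+1..n}" and cB2: "card B2 = r - q"
      and U: "\<forall>j. i \<le> j \<and> j \<le> n \<longrightarrow>
          (j - (q + card (B2 \<inter> {i+1..j})), q + card (B2 \<inter> {i+1..j})) \<in> region P Q \<and>
          i - q \<le> j - (q + card (B2 \<inter> {i+1..j})) \<and> q \<le> q + card (B2 \<inter> {i+1..j})"
      using UB2 unfolding URp_def by blast+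
    have fin1: "finite B1" using B1s finite_subset by blast
    have fin2: "finite B2" using B2s finite_subset by blast
    have dis: "B1 \<inter> B2 = {}"
    proof -
      have "\<forall>x\<in>B1. x \<le> i" "\<forall>x\<in>B2. i < x" using B1s B2s by auto
      then show ?thesis by fastforce
    qed
    have low: "nb B j = nb B1 j" if "j \<le> i" for j
    proof -
      have "B \<inter> {1..j} = B1 \<inter> {1..j}" using B B2s that by auto
      then show ?thesis by (simp add: nb_def)
    qed
    have high: "nb B j = q + card (B2 \<inter> {i+1..j})" if "i \<le> j" for j
    proof -
      have "B \<inter> {1..j} = B1 \<union> (B2 \<inter> {i+1..j})" using B B1s B2s that by auto
      moreover have "B1 \<inter> (B2 \<inter> {i+1..j}) = {}" using dis by auto
      ultimately show ?thesis using fin1 fin2 cB1 by (simp add: nb_def card_Un_disjoint)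
    qed
    have sB: "B \<subseteq> {1..n}" using B B1s B2s iq by auto
    have cBr: "card B = r" using B fin1 fin2 dis cB1 cB2 qr by (simp add: card_Un_disjoint)
    have bnd: "\<forall>k\<le>n. h k \<le> nb B k \<and> nb B k \<le> hgt Q k"
    proof (intro allI impI)
      fix k assume kn: "k \<le> n"
      show "h k \<le> nb B k \<and> nb B k \<le> hgt Q k"
      proof (cases "k \<le> i")
        case True
        have y: "nb B1 k \<le> k" by (rule nb_le)
        have "(k - nb B1 k, nb B1 k) \<in> region P Q" using L True by blast
        then show ?thesis using y low[OF True] kn lenP by (simp add: region_iff h_def)
      next
        case False
        have "card (B2 \<inter> {i+1..k}) \<le> k - i" by (rule card_Icc_le)
        then have y: "q + card (B2 \<inter> {i+1..k}) \<le> k" using False iq by arith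
        have "(k - (q + card (B2 \<inter> {i+1..k})), q + card (B2 \<inter> {i+1..k})) \<in> region P Q"
          using U False kn by simp
        then show ?thesis using y high[of k] False kn lenP by (simp add: region_iff h_def)
      qed
    qed
    have "B \<in> BS" unfolding BS_iff using sB cBr bnd by blast
    moreover have "nb B i = q" using low[of i] B1s cB1 by (simp add: nb_def Int_absorb2)
    ultimately show "B \<in> {B\<in>BS. nb B i = q}" by simp
  next
    fix B assume "B \<in> {B\<in>BS. nb B i = q}"
    then have BB: "B \<in> BS" and nbi: "nb B i = q" by auto
    have Bs: "B \<subseteq> {1..n}" using BB by (simp add: BS_iff)
    have cB: "card B = r" using BB by (simp add: BS_iff)
    define B1 where "B1 = B \<inter> {1..i}"
    define B2 where "B2 = B \<inter> {i+1..n}"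
    have B: "B = B1 \<union> B2" using Bs by (auto simp: B1_def B2_def)
    have fin: "finite B" using Bs finite_subset by blast
    have dis: "B1 \<inter> B2 = {}" by (auto simp: B1_def B2_def)
    have cB1: "card B1 = q" using nbi by (simp add: nb_def B1_def)
    have f1: "finite B1" "finite B2" using fin by (auto simp: B1_def B2_def)
    have "card B = card B1 + card B2" unfolding B using card_Un_disjoint[OF f1 dis] .
    then have cB2: "card B2 = r - q" using cB cB1 by arith
    have L: "LLp i q B1" unfolding LLp_def
    proof (intro conjI allI impI)
      show "B1 \<subseteq> {1..i}" by (auto simp: B1_def)
      show "card B1 = q" by (rule cB1)
    next
      fix j assume ji: "j \<le> i"
      have e: "nb B1 j = nb B j" using ji by (auto simp: nb_def B1_def intro!: arg_cong[where f=card])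
      have y: "nb B j \<le> j" by (rule nb_le)
      have "h j \<le> nb B j \<and> nb B j \<le> hgt Q j" using BSk[OF BB] ji iq by auto
      then show "(j - nb B1 j, nb B1 j) \<in> region P Q" using e y ji iq lenP by (simp add: region_iff h_def)
      have "nb B i \<le> nb B j + (i - j)" by (rule nb_diff[OF ji])
      then show "j - nb B1 j \<le> i - q" using e y nbi ji by arith
      show "nb B1 j \<le> q" using e nb_mono[OF ji, of B] nbi by simp
    qed
    have U: "URp i q B2" unfolding URp_def
    proof (intro conjI allI impI)
      show "B2 \<subseteq> {i+1..n}" by (auto simp: B2_def)
      show "card B2 = r - q" by (rule cB2)
    next
      fix j assume j: "i \<le> j \<and> j \<le> n"
      have "B2 \<inter> {i+1..j} = B \<inter> {i+1..j}" using j by (auto simp: B2_def)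
      then have e: "q + card (B2 \<inter> {i+1..j}) = nb B j" using nb_split[of i j B] j nbi by simp
      have y: "nb B j \<le> j" by (rule nb_le)
      have "h j \<le> nb B j \<and> nb B j \<le> hgt Q j" using BSk[OF BB] j by auto
      then show "(j - (q + card (B2 \<inter> {i+1..j})), q + card (B2 \<inter> {i+1..j})) \<in> region P Q"
        using e y j lenP by (simp add: region_iff h_def)
      have "nb B j \<le> nb B i + (j - i)" using nb_diff j by blast
      then show "i - q \<le> j - (q + card (B2 \<inter> {i+1..j}))" using e y nbi j iq by arith
      show "q \<le> q + card (B2 \<inter> {i+1..j})" by simp
    qed
    show "B \<in> {B1 \<union> B2 | B1 B2. LLp i q B1 \<and> URp i q B2}"
      using B L U by blast
  qed
qed


lemma pt_sum: "fst (pt L j) + snd (pt L j) = j"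
  using hgt_le[of L j] by (simp add: pt_def)

lemma h_lt: "1 \<le> k \<Longrightarrow> h k + 1 \<le> k"
  using hgt_diff[of 1 k P] h1 by (simp add: h_def)

lemma the_corner: assumes k: "k \<in> Six"
  shows "(THE c. c \<in> outside_corners P Q \<and> fst c + snd c = k) = (k - qq k, qq k)"
proof -
  have k2: "2 \<le> k" "k + 2 \<le> n" "pN k \<noteq> pN (k + 1)" using k by (auto simp: Six_eq)
  have Pk1: "P ! (k - 1) = N \<longleftrightarrow> pN k" by (simp add: pN_def)
  have Pk: "P ! k = N \<longleftrightarrow> pN (k + 1)" by (simp add: pN_def)
  have Qk1: "Q ! (k - 1) = P ! (k - 1)" using PQ[of k] k2 by simp
  have Qk: "Q ! k = P ! k" using PQ[of "k + 1"] k2 by simp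
  have ptP: "pt P k = (k - h k, h k)" by (simp add: pt_def h_def)
  have ptQ: "pt Q k = (k - (h k + 1), h k + 1)" using hQ[of k] k2 by (simp add: pt_def)
  have mem: "c \<in> outside_corners P Q \<and> fst c + snd c = k \<longleftrightarrow>
     (c = pt P k \<and> P ! (k - 1) = N \<and> P ! k = E) \<or> (c = pt Q k \<and> Q ! (k - 1) = E \<and> Q ! k = N)" for c
  proof
    assume a: "c \<in> outside_corners P Q \<and> fst c + snd c = k"
    then show "(c = pt P k \<and> P ! (k - 1) = N \<and> P ! k = E) \<or> (c = pt Q k \<and> Q ! (k - 1) = E \<and> Q ! k = N)"
      unfolding outside_corners_def using pt_sum by auto
  next
    assume "(c = pt P k \<and> P ! (k - 1) = N \<and> P ! k = E) \<or> (c = pt Q k \<and> Q ! (k - 1) = E \<and> Q ! k = N)"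
    then show "c \<in> outside_corners P Q \<and> fst c + snd c = k"
      unfolding outside_corners_def using pt_sum[of P k] pt_sum[of Q k] k2 lenP lenQ by auto
  qed
  show ?thesis
  proof (rule the_equality)
    show "(k - qq k, qq k) \<in> outside_corners P Q \<and> fst (k - qq k, qq k) + snd (k - qq k, qq k) = k"
      unfolding mem using k2 Pk1 Pk Qk1 Qk ptP ptQ by (cases "pN k") (auto simp: qq_def step_cases)
    fix c assume "c \<in> outside_corners P Q \<and> fst c + snd c = k"
    then show "c = (k - qq k, qq k)"
      unfolding mem using k2 Pk1 Pk Qk1 Qk ptP ptQ by (cases "pN k") (auto simp: qq_def step_cases)
  qed
qed

lemma idsum_bases: assumes k: "k \<in> Six" shows "bases (i_dsum m r P Q k) = {B\<in>BS. nb B k = qq k}"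
proof -
  have k2: "2 \<le> k" "k + 2 \<le> n" using k by (auto simp: Six_eq)
  have "qq k \<le> k" using h_lt[of k] h_le[of k] k2 by (auto simp: qq_def)
  moreover have "h k \<le> qq k" "qq k \<le> hgt Q k" using hQ[of k] k2 by (auto simp: qq_def)
  moreover have "k \<le> n" using k2 by simp
  ultimately show ?thesis unfolding i_dsum_def the_corner[OF k] by (intro corner_bases) auto
qed

lemma inj_map_sum: assumes f: "inj_on f A" and g: "inj_on g B" shows "inj_on (map_sum f g) (A <+> B)"
proof (rule inj_onI)
  fix x y assume x: "x \<in> A <+> B" and y: "y \<in> A <+> B" and e: "map_sum f g x = map_sum f g y"
  show "x = y"
  proof (cases x)
    case (Inl a)
    then have a: "a \<in> A" using x by blast
    show ?thesis
    proof (cases y)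
      case (Inl a')
      then have "a' \<in> A" using y by blast
      moreover have "f a = f a'" using e Inl \<open>x = Inl a\<close> by simp
      ultimately show ?thesis using a f Inl \<open>x = Inl a\<close> by (simp add: inj_on_eq_iff)
    next
      case (Inr b') then show ?thesis using e Inl by simp
    qed
  next
    case (Inr b)
    then have b: "b \<in> B" using x by blast
    show ?thesis
    proof (cases y)
      case (Inr b')
      then have "b' \<in> B" using y by blast
      moreover have "g b = g b'" using e Inr \<open>x = Inr b\<close> by simp
      ultimately show ?thesis using b g Inr \<open>x = Inr b\<close> by (simp add: inj_on_eq_iff)
    next
      case (Inl a') then show ?thesis using e Inr by simp
    qed
  qed
qed

lemma image_map_sum: "map_sum f g ` (A <+> B) = f ` A <+> g ` B"
proof (intro set_eqI iffI)
  fix z assume "z \<in> map_sum f g ` (A <+> B)"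
  then obtain x where x: "x \<in> A <+> B" "z = map_sum f g x" by blast
  show "z \<in> f ` A <+> g ` B"
  proof (cases x)
    case (Inl a)
    then have "a \<in> A" using x by blast
    then have "f a \<in> f ` A" by (rule imageI)
    then show ?thesis using x Inl by (simp add: InlI)
  next
    case (Inr b)
    then have "b \<in> B" using x by blast
    then have "g b \<in> g ` B" by (rule imageI)
    then show ?thesis using x Inr by (simp add: InrI)
  qed
next
  fix z assume z: "z \<in> f ` A <+> g ` B"
  show "z \<in> map_sum f g ` (A <+> B)"
  proof (cases z)
    case (Inl a)
    then obtain x where "x \<in> A" "a = f x" using z by blast
    then have "z = map_sum f g (Inl x)" "Inl x \<in> A <+> B" using Inl by auto
    then show ?thesis by blast
  next
    case (Inr b)
    then obtain x where "x \<in> B" "b = g x" using z by blast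
    then have "z = map_sum f g (Inr x)" "Inr x \<in> A <+> B" using Inr by auto
    then show ?thesis by blast
  qed
qed

lemma Dset_eq: "Dset m r P Q = deletion MM ` Dix" unfolding Dset_def Dix_def by (simp only: setcompr_eq_image)
lemma Cset_eq: "Cset m r P Q = contraction MM ` Cix" unfolding Cset_def Cix_def by (simp only: setcompr_eq_image)
lemma Sset_eq: "Sset m r P Q = i_dsum m r P Q ` Six" unfolding Sset_def Six_def by (simp only: setcompr_eq_image)

lemma inj_del: "inj_on (deletion MM) Dix"
proof (rule inj_onI)
  fix i j assume i: "i \<in> Dix" and j: "j \<in> Dix" and e: "deletion MM i = deletion MM j"
  then have "ground (deletion MM i) = ground (deletion MM j)" by simp
  then have "{1..n} - {i} = {1..n} - {j}" by (simp add: deletion_def restrict_def ground_def ground_MM[unfolded ground_def])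
  moreover have "i \<in> {1..n}" "j \<in> {1..n}" using i j by (simp_all add: Dix_def)
  ultimately show "i = j" by blast
qed

lemma psi_inj: "inj_on psi II" using psi_bij by (simp add: bij_betw_def)

lemma inj_con: "inj_on (contraction MM) Cix"
proof (rule inj_onI)
  fix i j assume i: "i \<in> Cix" and j: "j \<in> Cix" and e: "contraction MM i = contraction MM j"
  have ex: "\<exists>B\<in>BS. k \<in> B" if "k \<in> Cix" for k
  proof -
    have "Inr (Inl k) \<in> II" unfolding II_def by (intro InrI InlI that)
    then have "psi (Inr (Inl k)) \<noteq> {}" by (rule psi_ne)
    then show ?thesis using psi_C[OF that] by auto
  qed
  obtain Bi where "Bi \<in> BS" "i \<in> Bi" using ex[OF i] by blast
  obtain Bj where "Bj \<in> BS" "j \<in> Bj" using ex[OF j] by blast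
  have "{B\<in>BS. i \<in> B} = {B\<in>BS. j \<in> B}"
    using e contraction_bases[OF \<open>Bi \<in> BS\<close> \<open>i \<in> Bi\<close>] contraction_bases[OF \<open>Bj \<in> BS\<close> \<open>j \<in> Bj\<close>] by simp
  then have "psi (Inr (Inl i)) = psi (Inr (Inl j))" using psi_C[OF i] psi_C[OF j] by simp
  moreover have "Inr (Inl i) \<in> II" "Inr (Inl j) \<in> II" unfolding II_def by (intro InrI InlI i j)+
  ultimately show "i = j" using psi_inj by (auto dest: inj_onD)
qed

lemma inj_ids: "inj_on (i_dsum m r P Q) Six"
proof (rule inj_onI)
  fix i j assume i: "i \<in> Six" and j: "j \<in> Six" and e: "i_dsum m r P Q i = i_dsum m r P Q j"
  have "{B\<in>BS. nb B i = qq i} = {B\<in>BS. nb B j = qq j}"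
    using e idsum_bases[OF i] idsum_bases[OF j] by simp
  then have "psi (Inr (Inr i)) = psi (Inr (Inr j))" using psi_S[OF i] psi_S[OF j] by simp
  moreover have "Inr (Inr i) \<in> II" "Inr (Inr j) \<in> II" unfolding II_def by (intro InrI i j)+
  ultimately show "i = j" using psi_inj by (auto dest: inj_onD)
qed

theorem main_bij: "\<exists>f. bij_betw f {F. F facet_of matroid_polytope \<iota> (LPM m r P Q)}
              (Dset m r P Q <+> (Cset m r P Q <+> Sset m r P Q))"
proof -
  define \<Phi> where "\<Phi> = map_sum (deletion MM) (map_sum (contraction MM) (i_dsum m r P Q))"
  have "bij_betw \<Phi> II (Dset m r P Q <+> (Cset m r P Q <+> Sset m r P Q))"
    unfolding bij_betw_def
  proof
    show "inj_on \<Phi> II" unfolding \<Phi>_def II_def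
      by (intro inj_map_sum inj_del inj_con inj_ids)
    show "\<Phi> ` II = Dset m r P Q <+> (Cset m r P Q <+> Sset m r P Q)"
      unfolding \<Phi>_def II_def Dset_eq Cset_eq Sset_eq image_map_sum ..
  qed
  moreover have "bij_betw (inv_into II psi) {F. F facet_of Sp} II"
    by (rule bij_betw_inv_into[OF psi_bij])
  ultimately have "bij_betw (\<Phi> \<circ> inv_into II psi) {F. F facet_of Sp} (Dset m r P Q <+> (Cset m r P Q <+> Sset m r P Q))"
    by (rule bij_betw_trans[rotated])
  then show ?thesis unfolding Sp_eq by blast
qed

end


theorem lemma4p3:
  fixes m r :: nat and P Q :: "step list" and \<iota> :: "nat \<Rightarrow> 'n::finite"
  assumes "lpath m r P" and "lpath m r Q"
    and "never_above P Q"
    and "border_strip P Q"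
    and "bij_betw \<iota> {1..m+r} (UNIV :: 'n set)"
  shows "\<exists>f. bij_betw f {F. F facet_of matroid_polytope \<iota> (LPM m r P Q)}
              (Dset m r P Q <+> (Cset m r P Q <+> Sset m r P Q))"
proof -
  interpret strip m r P Q \<iota>
    using assms by (unfold_locales) auto
  show ?thesis by (rule main_bij)
qed

end
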